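(* Let $(R,\mathfrak m)$ be a noetherian local ring and $M$ an $R$-module. If $M$ admits a primary decomposition, then $\operatorname{Ass}_R(M)=\operatorname{Att}_R(D(M))$. If $M$ admits a secondary decomposition, then $\operatorname{Att}_R(M)=\operatorname{Ass}_R(D(M))$.
   Context: $E=E_R(R/\mathfrak m)$ denotes a fixed injective hull of $R/\mathfrak m$, and $D(\cdot)=\operatorname{Hom}_R(\cdot,E)$. A nonzero module $N$ is coprimary if for every $x\in R$ multiplication by $x$ on $N$ is injective or nilpotent; a submodule $U\subseteq M$ is primary if $M/U$ is coprimary; a primary decomposition of $M$ is a tuple $(U_1,\dots,U_s)$ of primary submodules with $U_1\cap\dots\cap U_s=0$. A nonzero module $N$ is secondary if for every $x\in R$ multiplication by $x$ on $N$ is surjective or nilpotent; a secondary decomposition of $M$ is a tuple $(U_1,\dots,U_s)$ of secondary submodules with $U_1+\dots+U_s=M$. For an arbitrary $R$-module $N$: $\operatorname{Ass}_R(N)$ is the set of primes $\mathfrak p$ with $\mathfrak p=\operatorname{Ann}_R(n)$ for some $n\in N$; $\operatorname{Att}_R(N)$ is the set of primes $\mathfrak p$ with $\mathfrak p=\operatorname{Ann}_R(N/U)$ for some submodule $U\subseteq N$. *)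

theory Defs
  imports "HOL-Algebra.Algebra"
begin

definition local_ring_with :: "('a, 'c) ring_scheme \<Rightarrow> 'a set \<Rightarrow> bool" where
  "local_ring_with R m \<longleftrightarrow> cring R \<and> maximalideal m R \<and>
     (\<forall>I. maximalideal I R \<longrightarrow> I = m)"

definition lin_maps :: "('a, 'c) ring_scheme \<Rightarrow> ('a, 'b) module \<Rightarrow> ('a, 'e) module \<Rightarrow> ('b \<Rightarrow> 'e) set" where
  "lin_maps R M E = {f. f \<in> carrier M \<rightarrow>\<^sub>E carrier E \<and>
     (\<forall>x\<in>carrier M. \<forall>y\<in>carrier M. f (x \<oplus>\<^bsub>M\<^esub> y) = f x \<oplus>\<^bsub>E\<^esub> f y) \<and>
     (\<forall>r\<in>carrier R. \<forall>x\<in>carrier M. f (r \<odot>\<^bsub>M\<^esub> x) = r \<odot>\<^bsub>E\<^esub> f x)}"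

text \<open>The R-module Hom_R(M,E) (the multiplicative fields are irrelevant for a module).\<close>
definition Hom_mod :: "('a, 'c) ring_scheme \<Rightarrow> ('a, 'b) module \<Rightarrow> ('a, 'e) module \<Rightarrow> ('a, 'b \<Rightarrow> 'e) module" where
  "Hom_mod R M E = \<lparr> partial_object.carrier = lin_maps R M E,
     monoid.mult = (\<lambda>f g. undefined), monoid.one = undefined,
     ring.zero = (\<lambda>x\<in>carrier M. \<zero>\<^bsub>E\<^esub>),
     ring.add = (\<lambda>f g. \<lambda>x\<in>carrier M. f x \<oplus>\<^bsub>E\<^esub> g x),
     module.smult = (\<lambda>r f. \<lambda>x\<in>carrier M. r \<odot>\<^bsub>E\<^esub> f x) \<rparr>"

text \<open>Injectivity, stated via Baer's criterion: every R-linear map from an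
  ideal I of R into E extends to R, i.e. is multiplication by an element of E.\<close>
definition injective_module :: "('a, 'c) ring_scheme \<Rightarrow> ('a, 'e) module \<Rightarrow> bool" where
  "injective_module R E \<longleftrightarrow> module R E \<and>
     (\<forall>I \<phi>. ideal I R \<longrightarrow> \<phi> \<in> I \<rightarrow> carrier E \<longrightarrow>
        (\<forall>a\<in>I. \<forall>b\<in>I. \<phi> (a \<oplus>\<^bsub>R\<^esub> b) = \<phi> a \<oplus>\<^bsub>E\<^esub> \<phi> b) \<longrightarrow>
        (\<forall>r\<in>carrier R. \<forall>a\<in>I. \<phi> (r \<otimes>\<^bsub>R\<^esub> a) = r \<odot>\<^bsub>E\<^esub> \<phi> a) \<longrightarrow>
        (\<exists>e\<in>carrier E. \<forall>a\<in>I. \<phi> a = a \<odot>\<^bsub>E\<^esub> e))"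

text \<open>E is an injective hull of R/m: E is injective and contains an element e0 with
  annihilator m (so R e0 is a copy of R/m), such that R e0 is essential in E, i.e. every
  nonzero submodule of E meets R e0 nontrivially.\<close>
definition injective_hull_residue :: "('a, 'c) ring_scheme \<Rightarrow> 'a set \<Rightarrow> ('a, 'e) module \<Rightarrow> bool" where
  "injective_hull_residue R m E \<longleftrightarrow> injective_module R E \<and>
     (\<exists>e0\<in>carrier E. {r \<in> carrier R. r \<odot>\<^bsub>E\<^esub> e0 = \<zero>\<^bsub>E\<^esub>} = m \<and>
        (\<forall>N. submodule N R E \<longrightarrow> N \<noteq> {\<zero>\<^bsub>E\<^esub>} \<longrightarrow>
           (\<exists>r\<in>carrier R. r \<odot>\<^bsub>E\<^esub> e0 \<in> N \<and> r \<odot>\<^bsub>E\<^esub> e0 \<noteq> \<zero>\<^bsub>E\<^esub>)))"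

definition Ass :: "('a, 'c) ring_scheme \<Rightarrow> ('a, 'b) module \<Rightarrow> 'a set set" where
  "Ass R M = {p. primeideal p R \<and>
     (\<exists>n\<in>carrier M. p = {r \<in> carrier R. r \<odot>\<^bsub>M\<^esub> n = \<zero>\<^bsub>M\<^esub>})}"

text \<open>Ann_R(M/U) = {r. r M \<subseteq> U}.\<close>
definition Att :: "('a, 'c) ring_scheme \<Rightarrow> ('a, 'b) module \<Rightarrow> 'a set set" where
  "Att R M = {p. primeideal p R \<and>
     (\<exists>U. submodule U R M \<and> p = {r \<in> carrier R. \<forall>n\<in>carrier M. r \<odot>\<^bsub>M\<^esub> n \<in> U})}"

definition primary_submodule :: "('a, 'c) ring_scheme \<Rightarrow> ('a, 'b) module \<Rightarrow> 'b set \<Rightarrow> bool" where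
  "primary_submodule R M U \<longleftrightarrow> submodule U R M \<and> U \<noteq> carrier M \<and>
     (\<forall>x\<in>carrier R.
        (\<forall>n\<in>carrier M. x \<odot>\<^bsub>M\<^esub> n \<in> U \<longrightarrow> n \<in> U) \<or>
        (\<exists>k::nat. \<forall>n\<in>carrier M. (x [^]\<^bsub>R\<^esub> k) \<odot>\<^bsub>M\<^esub> n \<in> U))"

definition has_primary_decomposition :: "('a, 'c) ring_scheme \<Rightarrow> ('a, 'b) module \<Rightarrow> bool" where
  "has_primary_decomposition R M \<longleftrightarrow>
     (\<exists>Us. (\<forall>U\<in>set Us. primary_submodule R M U) \<and>
           carrier M \<inter> \<Inter>(set Us) = {\<zero>\<^bsub>M\<^esub>})"

definition secondary_submodule :: "('a, 'c) ring_scheme \<Rightarrow> ('a, 'b) module \<Rightarrow> 'b set \<Rightarrow> bool" where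
  "secondary_submodule R M U \<longleftrightarrow> submodule U R M \<and> U \<noteq> {\<zero>\<^bsub>M\<^esub>} \<and>
     (\<forall>x\<in>carrier R.
        (\<forall>u\<in>U. \<exists>v\<in>U. x \<odot>\<^bsub>M\<^esub> v = u) \<or>
        (\<exists>k::nat. \<forall>u\<in>U. (x [^]\<^bsub>R\<^esub> k) \<odot>\<^bsub>M\<^esub> u = \<zero>\<^bsub>M\<^esub>))"

fun submodule_sum :: "('a, 'b) module \<Rightarrow> 'b set list \<Rightarrow> 'b set" where
  "submodule_sum M [] = {\<zero>\<^bsub>M\<^esub>}"
| "submodule_sum M (U # Us) = {a \<oplus>\<^bsub>M\<^esub> b | a b. a \<in> U \<and> b \<in> submodule_sum M Us}"

definition has_secondary_decomposition :: "('a, 'c) ring_scheme \<Rightarrow> ('a, 'b) module \<Rightarrow> bool" where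
  "has_secondary_decomposition R M \<longleftrightarrow>
     (\<exists>Us. (\<forall>U\<in>set Us. secondary_submodule R M U) \<and> submodule_sum M Us = carrier M)"

end

theory Submission
  imports Defs
begin


lemma (in module) submoduleI2:
  assumes "H \<subseteq> carrier M" "\<zero>\<^bsub>M\<^esub> \<in> H"
    "\<And>a b. a \<in> H \<Longrightarrow> b \<in> H \<Longrightarrow> a \<oplus>\<^bsub>M\<^esub> b \<in> H"
    "\<And>r a. r \<in> carrier R \<Longrightarrow> a \<in> H \<Longrightarrow> r \<odot>\<^bsub>M\<^esub> a \<in> H"
  shows "submodule H R M"
proof (rule submoduleI)
  fix a assume a: "a \<in> H"
  have "(\<ominus>\<^bsub>R\<^esub> \<one>\<^bsub>R\<^esub>) \<odot>\<^bsub>M\<^esub> a = \<ominus>\<^bsub>M\<^esub> a"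
    using smult_l_minus[of "\<one>\<^bsub>R\<^esub>" a] a assms(1) by auto
  thus "\<ominus>\<^bsub>M\<^esub> a \<in> H" using assms(4)[of "\<ominus>\<^bsub>R\<^esub> \<one>\<^bsub>R\<^esub>" a] a by auto
qed (use assms in auto)

lemma (in cring) idealI2:
  assumes "I \<subseteq> carrier R" "\<zero> \<in> I"
    "\<And>a b. a \<in> I \<Longrightarrow> b \<in> I \<Longrightarrow> a \<oplus> b \<in> I"
    "\<And>r a. r \<in> carrier R \<Longrightarrow> a \<in> I \<Longrightarrow> r \<otimes> a \<in> I"
  shows "ideal I R"
proof (rule idealI[OF ring_axioms])
  show "subgroup I (add_monoid R)"
  proof (rule add.subgroupI)
    fix a assume a: "a \<in> I"
    have "(\<ominus> \<one>) \<otimes> a = \<ominus> a" using a assms(1) l_minus by auto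
    thus "\<ominus> a \<in> I" using assms(4)[of "\<ominus> \<one>" a] a by simp
  next
    show "I \<subseteq> carrier R" using assms by simp
    show "I \<noteq> {}" using assms by auto
    fix a b assume "a \<in> I" "b \<in> I"
    thus "a \<oplus> b \<in> I" using assms by simp
  qed
  show "x \<otimes> a \<in> I" if "a \<in> I" "x \<in> carrier R" for a x using assms that by auto
  show "a \<otimes> x \<in> I" if "a \<in> I" "x \<in> carrier R" for a x using assms that m_comm[of a x] by auto
qed

locale twomod = cring R + M: module R M + E: module R E
  for R :: "('a,'c) ring_scheme" and M :: "('a,'b) module" and E :: "('a,'e) module"
begin

abbreviation "D \<equiv> Hom_mod R M E"

lemma D_simps:
  "carrier D = lin_maps R M E"
  "\<zero>\<^bsub>D\<^esub> = (\<lambda>x\<in>carrier M. \<zero>\<^bsub>E\<^esub>)"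
  "f \<oplus>\<^bsub>D\<^esub> g = (\<lambda>x\<in>carrier M. f x \<oplus>\<^bsub>E\<^esub> g x)"
  "r \<odot>\<^bsub>D\<^esub> f = (\<lambda>x\<in>carrier M. r \<odot>\<^bsub>E\<^esub> f x)"
  by (simp_all add: Hom_mod_def)

lemma linD:
  assumes "f \<in> lin_maps R M E"
  shows "f \<in> extensional (carrier M)" "\<And>x. x \<in> carrier M \<Longrightarrow> f x \<in> carrier E"
    "\<And>x y. x \<in> carrier M \<Longrightarrow> y \<in> carrier M \<Longrightarrow> f (x \<oplus>\<^bsub>M\<^esub> y) = f x \<oplus>\<^bsub>E\<^esub> f y"
    "\<And>r x. r \<in> carrier R \<Longrightarrow> x \<in> carrier M \<Longrightarrow> f (r \<odot>\<^bsub>M\<^esub> x) = r \<odot>\<^bsub>E\<^esub> f x"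
  using assms unfolding lin_maps_def by (auto simp: PiE_iff)

lemma linI:
  assumes "f \<in> extensional (carrier M)" "\<And>x. x \<in> carrier M \<Longrightarrow> f x \<in> carrier E"
    "\<And>x y. x \<in> carrier M \<Longrightarrow> y \<in> carrier M \<Longrightarrow> f (x \<oplus>\<^bsub>M\<^esub> y) = f x \<oplus>\<^bsub>E\<^esub> f y"
    "\<And>r x. r \<in> carrier R \<Longrightarrow> x \<in> carrier M \<Longrightarrow> f (r \<odot>\<^bsub>M\<^esub> x) = r \<odot>\<^bsub>E\<^esub> f x"
  shows "f \<in> lin_maps R M E"
  using assms unfolding lin_maps_def by (auto simp: PiE_iff)

lemma lin_zero: "f \<in> lin_maps R M E \<Longrightarrow> f \<zero>\<^bsub>M\<^esub> = \<zero>\<^bsub>E\<^esub>"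
  using linD(4)[of f "\<zero>\<^bsub>R\<^esub>" "\<zero>\<^bsub>M\<^esub>"] linD(2)[of f "\<zero>\<^bsub>M\<^esub>"] by simp

lemma lin_eqI:
  assumes "f \<in> lin_maps R M E" "g \<in> lin_maps R M E" "\<And>x. x \<in> carrier M \<Longrightarrow> f x = g x"
  shows "f = g"
  using linD(1)[OF assms(1)] linD(1)[OF assms(2)] assms(3) by (rule extensionalityI)

lemma D_module: "module R D"
proof -
  have add_cl: "f \<oplus>\<^bsub>D\<^esub> g \<in> carrier D" if "f \<in> carrier D" "g \<in> carrier D" for f g
    using that unfolding D_simps
    by (intro linI) (auto simp: linD E.a_ac E.smult_r_distr)
  have zero_cl: "\<zero>\<^bsub>D\<^esub> \<in> carrier D"
    unfolding D_simps by (intro linI) auto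
  have neg_cl: "(\<lambda>x\<in>carrier M. \<ominus>\<^bsub>E\<^esub> f x) \<in> carrier D" if "f \<in> carrier D" for f
    using that unfolding D_simps
    by (intro linI) (auto simp: linD E.minus_add E.smult_r_minus)
  have sm_cl: "r \<odot>\<^bsub>D\<^esub> f \<in> carrier D" if "r \<in> carrier R" "f \<in> carrier D" for r f
    using that unfolding D_simps
    by (intro linI) (auto simp: linD E.smult_r_distr E.smult_assoc1[symmetric] m_comm)
  have ag: "abelian_group D"
  proof (rule abelian_groupI)
    fix x y z assume xyz: "x \<in> carrier D" "y \<in> carrier D" "z \<in> carrier D"
    show "x \<oplus>\<^bsub>D\<^esub> y \<oplus>\<^bsub>D\<^esub> z = x \<oplus>\<^bsub>D\<^esub> (y \<oplus>\<^bsub>D\<^esub> z)"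
      using xyz add_cl unfolding D_simps by (intro ext) (auto simp: linD E.a_ac)
  next
    fix x y assume xyz: "x \<in> carrier D" "y \<in> carrier D"
    show "x \<oplus>\<^bsub>D\<^esub> y = y \<oplus>\<^bsub>D\<^esub> x"
      using xyz unfolding D_simps by (intro ext) (auto simp: linD E.a_ac)
  next
    fix x assume x: "x \<in> carrier D"
    show "\<zero>\<^bsub>D\<^esub> \<oplus>\<^bsub>D\<^esub> x = x"
      using x unfolding D_simps by (intro lin_eqI) (auto simp: linD intro!: linI)
    show "\<exists>y\<in>carrier D. y \<oplus>\<^bsub>D\<^esub> x = \<zero>\<^bsub>D\<^esub>"
      using x neg_cl[OF x] unfolding D_simps
      by (intro bexI[of _ "(\<lambda>x'\<in>carrier M. \<ominus>\<^bsub>E\<^esub> x x')"] ext) (auto simp: linD E.l_neg)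
  qed (use add_cl zero_cl in auto)
  show ?thesis
  proof (rule moduleI[OF is_cring ag])
    fix a x assume "a \<in> carrier R" "x \<in> carrier D" thus "a \<odot>\<^bsub>D\<^esub> x \<in> carrier D" by (rule sm_cl)
  next
    fix a b x assume "a \<in> carrier R" "b \<in> carrier R" "x \<in> carrier D"
    thus "(a \<oplus>\<^bsub>R\<^esub> b) \<odot>\<^bsub>D\<^esub> x = a \<odot>\<^bsub>D\<^esub> x \<oplus>\<^bsub>D\<^esub> b \<odot>\<^bsub>D\<^esub> x"
      unfolding D_simps by (intro ext) (auto simp: linD E.smult_l_distr)
  next
    fix a x y assume "a \<in> carrier R" "x \<in> carrier D" "y \<in> carrier D"
    thus "a \<odot>\<^bsub>D\<^esub> (x \<oplus>\<^bsub>D\<^esub> y) = a \<odot>\<^bsub>D\<^esub> x \<oplus>\<^bsub>D\<^esub> a \<odot>\<^bsub>D\<^esub> y"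
      unfolding D_simps by (intro ext) (auto simp: linD E.smult_r_distr)
  next
    fix a b x assume "a \<in> carrier R" "b \<in> carrier R" "x \<in> carrier D"
    thus "(a \<otimes>\<^bsub>R\<^esub> b) \<odot>\<^bsub>D\<^esub> x = a \<odot>\<^bsub>D\<^esub> (b \<odot>\<^bsub>D\<^esub> x)"
      unfolding D_simps by (intro ext) (auto simp: linD E.smult_assoc1)
  next
    fix x assume "x \<in> carrier D"
    thus "\<one>\<^bsub>R\<^esub> \<odot>\<^bsub>D\<^esub> x = x"
      unfolding D_simps by (intro lin_eqI) (auto simp: linD intro!: linI)
  qed
qed


definition lin_graph :: "('b \<times> 'e) set \<Rightarrow> bool" where
  "lin_graph G \<longleftrightarrow> G \<subseteq> carrier M \<times> carrier E \<and> (\<zero>\<^bsub>M\<^esub>, \<zero>\<^bsub>E\<^esub>) \<in> G \<and>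
     (\<forall>a b a' b'. (a,b) \<in> G \<longrightarrow> (a',b') \<in> G \<longrightarrow> (a \<oplus>\<^bsub>M\<^esub> a', b \<oplus>\<^bsub>E\<^esub> b') \<in> G) \<and>
     (\<forall>r a b. r \<in> carrier R \<longrightarrow> (a,b) \<in> G \<longrightarrow> (r \<odot>\<^bsub>M\<^esub> a, r \<odot>\<^bsub>E\<^esub> b) \<in> G) \<and>
     (\<forall>b. (\<zero>\<^bsub>M\<^esub>, b) \<in> G \<longrightarrow> b = \<zero>\<^bsub>E\<^esub>)"

lemma lin_graphD:
  assumes "lin_graph G"
  shows "G \<subseteq> carrier M \<times> carrier E" "(\<zero>\<^bsub>M\<^esub>, \<zero>\<^bsub>E\<^esub>) \<in> G"
    "\<And>a b a' b'. (a,b) \<in> G \<Longrightarrow> (a',b') \<in> G \<Longrightarrow> (a \<oplus>\<^bsub>M\<^esub> a', b \<oplus>\<^bsub>E\<^esub> b') \<in> G"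
    "\<And>r a b. r \<in> carrier R \<Longrightarrow> (a,b) \<in> G \<Longrightarrow> (r \<odot>\<^bsub>M\<^esub> a, r \<odot>\<^bsub>E\<^esub> b) \<in> G"
    "\<And>b. (\<zero>\<^bsub>M\<^esub>, b) \<in> G \<Longrightarrow> b = \<zero>\<^bsub>E\<^esub>"
proof -
  note A = assms[unfolded lin_graph_def]
  show "G \<subseteq> carrier M \<times> carrier E" using A by (elim conjE)
  show "(\<zero>\<^bsub>M\<^esub>, \<zero>\<^bsub>E\<^esub>) \<in> G" using A by (elim conjE)
  show "\<And>a b a' b'. (a,b) \<in> G \<Longrightarrow> (a',b') \<in> G \<Longrightarrow> (a \<oplus>\<^bsub>M\<^esub> a', b \<oplus>\<^bsub>E\<^esub> b') \<in> G"
    using A by meson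
  show "\<And>r a b. r \<in> carrier R \<Longrightarrow> (a,b) \<in> G \<Longrightarrow> (r \<odot>\<^bsub>M\<^esub> a, r \<odot>\<^bsub>E\<^esub> b) \<in> G"
    using A by meson
  show "\<And>b. (\<zero>\<^bsub>M\<^esub>, b) \<in> G \<Longrightarrow> b = \<zero>\<^bsub>E\<^esub>"
    using A by meson
qed

lemma lin_graphI:
  assumes "G \<subseteq> carrier M \<times> carrier E" "(\<zero>\<^bsub>M\<^esub>, \<zero>\<^bsub>E\<^esub>) \<in> G"
    "\<And>a b a' b'. (a,b) \<in> G \<Longrightarrow> (a',b') \<in> G \<Longrightarrow> (a \<oplus>\<^bsub>M\<^esub> a', b \<oplus>\<^bsub>E\<^esub> b') \<in> G"
    "\<And>r a b. r \<in> carrier R \<Longrightarrow> (a,b) \<in> G \<Longrightarrow> (r \<odot>\<^bsub>M\<^esub> a, r \<odot>\<^bsub>E\<^esub> b) \<in> G"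
    "\<And>b. (\<zero>\<^bsub>M\<^esub>, b) \<in> G \<Longrightarrow> b = \<zero>\<^bsub>E\<^esub>"
  shows "lin_graph G"
  unfolding lin_graph_def
  apply (intro conjI allI impI)
      apply (rule assms(1))
     apply (rule assms(2))
    apply (erule (1) assms(3))
   apply (erule (1) assms(4))
  apply (erule assms(5))
  done

lemma lin_graph_fun:
  assumes G: "lin_graph G" and ab: "(a,b) \<in> G" "(a,b') \<in> G"
  shows "b = b'"
proof -
  have c: "a \<in> carrier M" "b \<in> carrier E" "b' \<in> carrier E" using lin_graphD(1)[OF G] ab by auto
  have "((\<ominus>\<^bsub>R\<^esub> \<one>\<^bsub>R\<^esub>) \<odot>\<^bsub>M\<^esub> a, (\<ominus>\<^bsub>R\<^esub> \<one>\<^bsub>R\<^esub>) \<odot>\<^bsub>E\<^esub> b') \<in> G"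
    using lin_graphD(4)[OF G _ ab(2)] by simp
  hence "(\<ominus>\<^bsub>M\<^esub> a, \<ominus>\<^bsub>E\<^esub> b') \<in> G" using c by (simp add: M.smult_l_minus E.smult_l_minus)
  hence "(a \<oplus>\<^bsub>M\<^esub> \<ominus>\<^bsub>M\<^esub> a, b \<oplus>\<^bsub>E\<^esub> \<ominus>\<^bsub>E\<^esub> b') \<in> G" using lin_graphD(3)[OF G ab(1)] by blast
  hence "(\<zero>\<^bsub>M\<^esub>, b \<oplus>\<^bsub>E\<^esub> \<ominus>\<^bsub>E\<^esub> b') \<in> G" using c by (simp add: M.r_neg)
  hence z: "b \<oplus>\<^bsub>E\<^esub> \<ominus>\<^bsub>E\<^esub> b' = \<zero>\<^bsub>E\<^esub>" by (rule lin_graphD(5)[OF G])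
  have "b = b \<oplus>\<^bsub>E\<^esub> (\<ominus>\<^bsub>E\<^esub> b' \<oplus>\<^bsub>E\<^esub> b')" using c by (simp add: E.l_neg)
  also have "\<dots> = (b \<oplus>\<^bsub>E\<^esub> \<ominus>\<^bsub>E\<^esub> b') \<oplus>\<^bsub>E\<^esub> b'" using c by (simp add: E.a_assoc)
  also have "\<dots> = b'" using z c by simp
  finally show ?thesis .
qed

end

locale injctx = twomod +
  assumes inj: "injective_module R E"
begin

lemma baer:
  assumes "ideal I R" "\<phi> \<in> I \<rightarrow> carrier E"
    "\<And>a b. a \<in> I \<Longrightarrow> b \<in> I \<Longrightarrow> \<phi> (a \<oplus>\<^bsub>R\<^esub> b) = \<phi> a \<oplus>\<^bsub>E\<^esub> \<phi> b"
    "\<And>r a. r \<in> carrier R \<Longrightarrow> a \<in> I \<Longrightarrow> \<phi> (r \<otimes>\<^bsub>R\<^esub> a) = r \<odot>\<^bsub>E\<^esub> \<phi> a"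
  shows "\<exists>e\<in>carrier E. \<forall>a\<in>I. \<phi> a = a \<odot>\<^bsub>E\<^esub> e"
  using inj assms unfolding injective_module_def by blast

end

context injctx begin
lemma extend_graph:
  assumes G: "lin_graph G"
  shows "\<exists>f\<in>lin_maps R M E. \<forall>a b. (a,b) \<in> G \<longrightarrow> f a = b"
proof -
  define A where "A = {H. lin_graph H \<and> G \<subseteq> H}"
  have "\<exists>H\<in>A. \<forall>Z\<in>A. H \<subseteq> Z \<longrightarrow> Z = H"
  proof (rule subset_Zorn_nonempty)
    show "A \<noteq> {}" using G unfolding A_def by auto
  next
    fix C assume C: "C \<noteq> {}" "subset.chain A C"
    have CA: "C \<subseteq> A" and tot: "\<And>Z Y. Z \<in> C \<Longrightarrow> Y \<in> C \<Longrightarrow> Z \<subseteq> Y \<or> Y \<subseteq> Z"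
      using C(2) unfolding subset_chain_def by auto
    have LG: "\<And>Z. Z \<in> C \<Longrightarrow> lin_graph Z" "\<And>Z. Z \<in> C \<Longrightarrow> G \<subseteq> Z" using CA unfolding A_def by auto
    obtain Z0 where Z0: "Z0 \<in> C" using C(1) by auto
    have "lin_graph (\<Union>C)"
    proof (rule lin_graphI)
      show "\<Union> C \<subseteq> carrier M \<times> carrier E" using lin_graphD(1)[OF LG(1)] by blast
      show "(\<zero>\<^bsub>M\<^esub>, \<zero>\<^bsub>E\<^esub>) \<in> \<Union> C" using lin_graphD(2)[OF LG(1)[OF Z0]] Z0 by blast
    next
      fix a b a' b' assume "(a, b) \<in> \<Union> C" "(a', b') \<in> \<Union> C"
      then obtain Y1 Y2 where XY: "Y1 \<in> C" "Y2 \<in> C" "(a,b) \<in> Y1" "(a',b') \<in> Y2" by auto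
      show "(a \<oplus>\<^bsub>M\<^esub> a', b \<oplus>\<^bsub>E\<^esub> b') \<in> \<Union> C"
      proof (cases "Y1 \<subseteq> Y2")
        case True thus ?thesis using XY lin_graphD(3)[OF LG(1)[of Y2]] by blast
      next
        case False hence "Y2 \<subseteq> Y1" using tot XY by blast
        thus ?thesis using XY lin_graphD(3)[OF LG(1)[of Y1]] by blast
      qed
    next
      fix r a b assume "r \<in> carrier R" "(a, b) \<in> \<Union> C"
      thus "(r \<odot>\<^bsub>M\<^esub> a, r \<odot>\<^bsub>E\<^esub> b) \<in> \<Union> C" using lin_graphD(4)[OF LG(1)] by blast
    next
      fix b assume "(\<zero>\<^bsub>M\<^esub>, b) \<in> \<Union> C"
      thus "b = \<zero>\<^bsub>E\<^esub>" using lin_graphD(5)[OF LG(1)] by blast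
    qed
    thus "\<Union>C \<in> A" using LG(2) Z0 unfolding A_def by blast
  qed
  then obtain H where HA: "H \<in> A" and HAm: "\<forall>Z\<in>A. H \<subseteq> Z \<longrightarrow> Z = H" by (elim bexE)
  have H: "lin_graph H" "G \<subseteq> H" using HA unfolding A_def by simp_all
  have Hmax: "Z = H" if "lin_graph Z" "G \<subseteq> Z" "H \<subseteq> Z" for Z
    using HAm that unfolding A_def by simp
  note Hc = lin_graphD(1)[OF H(1)] and H0 = lin_graphD(2)[OF H(1)]
    and Hadd = lin_graphD(3)[OF H(1)] and Hsm = lin_graphD(4)[OF H(1)]
  have total: "\<exists>b. (m,b) \<in> H" if m: "m \<in> carrier M" for m
  proof (rule ccontr)
    assume nm: "\<not> (\<exists>b. (m,b) \<in> H)"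
    define I where "I = {r \<in> carrier R. \<exists>b. (r \<odot>\<^bsub>M\<^esub> m, b) \<in> H}"
    define \<phi> where "\<phi> r = (THE b. (r \<odot>\<^bsub>M\<^esub> m, b) \<in> H)" for r
    have phi: "(r \<odot>\<^bsub>M\<^esub> m, \<phi> r) \<in> H" if rI: "r \<in> I" for r
    proof -
      obtain b where b: "(r \<odot>\<^bsub>M\<^esub> m, b) \<in> H" using rI unfolding I_def by blast
      have "\<phi> r = b" unfolding \<phi>_def using lin_graph_fun[OF H(1) b] b by blast
      thus ?thesis using b by simp
    qed
    have phi_eq: "\<phi> r = b" if "(r \<odot>\<^bsub>M\<^esub> m, b) \<in> H" "r \<in> carrier R" for r b
      using lin_graph_fun[OF H(1) phi[of r] that(1)] that unfolding I_def by blast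
    have "ideal I R"
    proof (rule idealI2)
      show "I \<subseteq> carrier R" unfolding I_def by auto
      show "\<zero>\<^bsub>R\<^esub> \<in> I" unfolding I_def using H0 m by auto
    next
      fix a b assume "a \<in> I" "b \<in> I"
      then obtain x y where "(a \<odot>\<^bsub>M\<^esub> m, x) \<in> H" "(b \<odot>\<^bsub>M\<^esub> m, y) \<in> H" "a \<in> carrier R" "b \<in> carrier R"
        unfolding I_def by auto
      hence "((a \<oplus>\<^bsub>R\<^esub> b) \<odot>\<^bsub>M\<^esub> m, x \<oplus>\<^bsub>E\<^esub> y) \<in> H" using Hadd m by (simp add: M.smult_l_distr)
      thus "a \<oplus>\<^bsub>R\<^esub> b \<in> I" unfolding I_def using \<open>a \<in> carrier R\<close> \<open>b \<in> carrier R\<close> by blast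
    next
      fix r a assume "r \<in> carrier R" "a \<in> I"
      then obtain x where "(a \<odot>\<^bsub>M\<^esub> m, x) \<in> H" "a \<in> carrier R"
        unfolding I_def by auto
      hence "((r \<otimes>\<^bsub>R\<^esub> a) \<odot>\<^bsub>M\<^esub> m, r \<odot>\<^bsub>E\<^esub> x) \<in> H" using Hsm m \<open>r \<in> carrier R\<close> by (simp add: M.smult_assoc1)
      thus "r \<otimes>\<^bsub>R\<^esub> a \<in> I" unfolding I_def using \<open>a \<in> carrier R\<close> \<open>r \<in> carrier R\<close> by blast
    qed
    have "\<exists>e\<in>carrier E. \<forall>a\<in>I. \<phi> a = a \<odot>\<^bsub>E\<^esub> e"
    proof (rule baer[OF \<open>ideal I R\<close>])
      show "\<phi> \<in> I \<rightarrow> carrier E" using phi Hc by blast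
    next
      fix a b assume ab: "a \<in> I" "b \<in> I"
      hence "((a \<oplus>\<^bsub>R\<^esub> b) \<odot>\<^bsub>M\<^esub> m, \<phi> a \<oplus>\<^bsub>E\<^esub> \<phi> b) \<in> H"
        using Hadd[OF phi phi] m unfolding I_def by (auto simp: M.smult_l_distr)
      thus "\<phi> (a \<oplus>\<^bsub>R\<^esub> b) = \<phi> a \<oplus>\<^bsub>E\<^esub> \<phi> b" using phi_eq ab unfolding I_def by auto
    next
      fix r a assume ra: "r \<in> carrier R" "a \<in> I"
      hence "((r \<otimes>\<^bsub>R\<^esub> a) \<odot>\<^bsub>M\<^esub> m, r \<odot>\<^bsub>E\<^esub> \<phi> a) \<in> H"
        using Hsm[OF ra(1) phi[OF ra(2)]] m unfolding I_def by (auto simp: M.smult_assoc1)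
      thus "\<phi> (r \<otimes>\<^bsub>R\<^esub> a) = r \<odot>\<^bsub>E\<^esub> \<phi> a" using phi_eq ra unfolding I_def by auto
    qed
    then obtain e where e: "e \<in> carrier E" "\<And>a. a \<in> I \<Longrightarrow> \<phi> a = a \<odot>\<^bsub>E\<^esub> e" by blast
    define H' where "H' = {(a \<oplus>\<^bsub>M\<^esub> r \<odot>\<^bsub>M\<^esub> m, b \<oplus>\<^bsub>E\<^esub> r \<odot>\<^bsub>E\<^esub> e) | a b r. (a,b) \<in> H \<and> r \<in> carrier R}"
    have "lin_graph H'"
    proof (rule lin_graphI)
      show "H' \<subseteq> carrier M \<times> carrier E" unfolding H'_def using Hc m e by auto
      show "(\<zero>\<^bsub>M\<^esub>, \<zero>\<^bsub>E\<^esub>) \<in> H'" unfolding H'_def using H0 m e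
        by (auto intro!: exI[of _ "\<zero>\<^bsub>M\<^esub>"] exI[of _ "\<zero>\<^bsub>E\<^esub>"] exI[of _ "\<zero>\<^bsub>R\<^esub>"])
    next
      fix a b a' b' assume "(a, b) \<in> H'" "(a', b') \<in> H'"
      then obtain x y r x' y' r' where Z: "a = x \<oplus>\<^bsub>M\<^esub> r \<odot>\<^bsub>M\<^esub> m" "b = y \<oplus>\<^bsub>E\<^esub> r \<odot>\<^bsub>E\<^esub> e" "(x,y) \<in> H" "r \<in> carrier R"
        "a' = x' \<oplus>\<^bsub>M\<^esub> r' \<odot>\<^bsub>M\<^esub> m" "b' = y' \<oplus>\<^bsub>E\<^esub> r' \<odot>\<^bsub>E\<^esub> e" "(x',y') \<in> H" "r' \<in> carrier R"
        unfolding H'_def by blast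
      have c: "x \<in> carrier M" "y \<in> carrier E" "x' \<in> carrier M" "y' \<in> carrier E" using Z Hc by auto
      have "a \<oplus>\<^bsub>M\<^esub> a' = (x \<oplus>\<^bsub>M\<^esub> x') \<oplus>\<^bsub>M\<^esub> (r \<oplus>\<^bsub>R\<^esub> r') \<odot>\<^bsub>M\<^esub> m"
        using Z c m by (simp add: M.smult_l_distr M.a_ac)
      moreover have "b \<oplus>\<^bsub>E\<^esub> b' = (y \<oplus>\<^bsub>E\<^esub> y') \<oplus>\<^bsub>E\<^esub> (r \<oplus>\<^bsub>R\<^esub> r') \<odot>\<^bsub>E\<^esub> e"
        using Z c e by (simp add: E.smult_l_distr E.a_ac)
      ultimately show "(a \<oplus>\<^bsub>M\<^esub> a', b \<oplus>\<^bsub>E\<^esub> b') \<in> H'"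
        unfolding H'_def using Hadd[OF Z(3) Z(7)] Z(4,8) by blast
    next
      fix s a b assume s: "s \<in> carrier R" and "(a, b) \<in> H'"
      then obtain x y r where Z: "a = x \<oplus>\<^bsub>M\<^esub> r \<odot>\<^bsub>M\<^esub> m" "b = y \<oplus>\<^bsub>E\<^esub> r \<odot>\<^bsub>E\<^esub> e" "(x,y) \<in> H" "r \<in> carrier R"
        unfolding H'_def by blast
      have c: "x \<in> carrier M" "y \<in> carrier E" using Z Hc by auto
      have "s \<odot>\<^bsub>M\<^esub> a = s \<odot>\<^bsub>M\<^esub> x \<oplus>\<^bsub>M\<^esub> (s \<otimes>\<^bsub>R\<^esub> r) \<odot>\<^bsub>M\<^esub> m"
        using Z c m s by (simp add: M.smult_r_distr M.smult_assoc1)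
      moreover have "s \<odot>\<^bsub>E\<^esub> b = s \<odot>\<^bsub>E\<^esub> y \<oplus>\<^bsub>E\<^esub> (s \<otimes>\<^bsub>R\<^esub> r) \<odot>\<^bsub>E\<^esub> e"
        using Z c e s by (simp add: E.smult_r_distr E.smult_assoc1)
      ultimately show "(s \<odot>\<^bsub>M\<^esub> a, s \<odot>\<^bsub>E\<^esub> b) \<in> H'"
        unfolding H'_def using Hsm[OF s Z(3)] Z(4) s by blast
    next
      fix b assume "(\<zero>\<^bsub>M\<^esub>, b) \<in> H'"
      then obtain x y r where Z: "\<zero>\<^bsub>M\<^esub> = x \<oplus>\<^bsub>M\<^esub> r \<odot>\<^bsub>M\<^esub> m" "b = y \<oplus>\<^bsub>E\<^esub> r \<odot>\<^bsub>E\<^esub> e" "(x,y) \<in> H" "r \<in> carrier R"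
        unfolding H'_def by blast
      have c: "x \<in> carrier M" "y \<in> carrier E" using Z Hc by auto
      have "x = \<ominus>\<^bsub>M\<^esub> (r \<odot>\<^bsub>M\<^esub> m)" using Z(1) c m Z(4)
        by (metis M.add.inv_equality M.smult_closed)
      hence "x = (\<ominus>\<^bsub>R\<^esub> r) \<odot>\<^bsub>M\<^esub> m" using Z(4) m by (simp add: M.smult_l_minus)
      hence xI: "\<ominus>\<^bsub>R\<^esub> r \<in> I" and "\<phi> (\<ominus>\<^bsub>R\<^esub> r) = y" using Z(3,4) phi_eq unfolding I_def by auto
      hence "y = \<ominus>\<^bsub>E\<^esub> (r \<odot>\<^bsub>E\<^esub> e)" using e Z(4) by (simp add: E.smult_l_minus)
      thus "b = \<zero>\<^bsub>E\<^esub>" using Z(2) Z(4) e by (simp add: E.l_neg)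
    qed
    moreover have "H \<subseteq> H'"
    proof
      fix p assume "p \<in> H"
      moreover obtain a b where "p = (a,b)" by fastforce
      ultimately show "p \<in> H'" unfolding H'_def using Hc m e
        by (auto intro!: exI[of _ a] exI[of _ b] exI[of _ "\<zero>\<^bsub>R\<^esub>"])
    qed
    moreover have "(m, e) \<in> H'" unfolding H'_def using H0 m e
        by (auto intro!: exI[of _ "\<zero>\<^bsub>M\<^esub>"] exI[of _ "\<zero>\<^bsub>E\<^esub>"] exI[of _ "\<one>\<^bsub>R\<^esub>"])
    ultimately show False using Hmax[of H'] H(2) nm by blast
  qed
  define f where "f = (\<lambda>x\<in>carrier M. THE b. (x,b) \<in> H)"
  have fH: "(x, f x) \<in> H" if xM: "x \<in> carrier M" for x
  proof -
    obtain b where b: "(x,b) \<in> H" using total[OF xM] by blast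
    have "f x = (THE b. (x,b) \<in> H)" unfolding f_def using xM by simp
    also have "\<dots> = b" using b by (intro the_equality) (auto intro: lin_graph_fun[OF H(1) _ b])
    finally have "f x = b" .
    thus ?thesis using b by simp
  qed
  have feq: "f x = b" if xb: "(x,b) \<in> H" for x b
  proof -
    have "x \<in> carrier M" using xb Hc by blast
    from lin_graph_fun[OF H(1) fH[OF this] xb] show ?thesis .
  qed
  have flin: "f \<in> lin_maps R M E"
  proof (rule linI)
    show "f \<in> extensional (carrier M)" unfolding f_def by simp
    show "f x \<in> carrier E" if "x \<in> carrier M" for x using fH[OF that] Hc by auto
    show "f (x \<oplus>\<^bsub>M\<^esub> y) = f x \<oplus>\<^bsub>E\<^esub> f y" if "x \<in> carrier M" "y \<in> carrier M" for x y
      using feq[OF Hadd[OF fH fH]] that by blast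
    show "f (r \<odot>\<^bsub>M\<^esub> x) = r \<odot>\<^bsub>E\<^esub> f x" if "r \<in> carrier R" "x \<in> carrier M" for r x
      using feq[OF Hsm[OF that(1) fH[OF that(2)]]] by blast
  qed
  have fG: "\<forall>a b. (a,b) \<in> G \<longrightarrow> f a = b"
  proof (intro allI impI)
    fix a b assume ab: "(a,b) \<in> G"
    show "f a = b" using feq[OF subsetD[OF H(2) ab]] .
  qed
  show ?thesis using flin fG by (intro bexI[of _ f])
qed

end


lemma (in module) submoduleD:
  assumes "submodule P R M"
  shows "P \<subseteq> carrier M" "\<zero>\<^bsub>M\<^esub> \<in> P" "\<And>a b. a \<in> P \<Longrightarrow> b \<in> P \<Longrightarrow> a \<oplus>\<^bsub>M\<^esub> b \<in> P"
    "\<And>a. a \<in> P \<Longrightarrow> \<ominus>\<^bsub>M\<^esub> a \<in> P" "\<And>r a. r \<in> carrier R \<Longrightarrow> a \<in> P \<Longrightarrow> r \<odot>\<^bsub>M\<^esub> a \<in> P"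
proof -
  have z: "\<zero>\<^bsub>M\<^esub> \<in> P" using subgroup.one_closed[OF submodule.axioms(1)[OF assms]] by simp
  show "P \<subseteq> carrier M" "\<zero>\<^bsub>M\<^esub> \<in> P" "\<And>a b. a \<in> P \<Longrightarrow> b \<in> P \<Longrightarrow> a \<oplus>\<^bsub>M\<^esub> b \<in> P"
    "\<And>a. a \<in> P \<Longrightarrow> \<ominus>\<^bsub>M\<^esub> a \<in> P" "\<And>r a. r \<in> carrier R \<Longrightarrow> a \<in> P \<Longrightarrow> r \<odot>\<^bsub>M\<^esub> a \<in> P"
    using submoduleE[OF assms] z by auto
qed

locale fullctx = injctx + noetherian_ring R +
  fixes mm :: "'a set"
  assumes loc: "local_ring_with R mm" and hull: "injective_hull_residue R mm E"
begin

lemma mm_max: "maximalideal mm R" using loc unfolding local_ring_with_def by blast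

lemma proper_in_mm:
  assumes J: "ideal J R" "J \<noteq> carrier R"
  shows "J \<subseteq> mm"
proof -
  define A where "A = {K. ideal K R \<and> J \<subseteq> K \<and> K \<noteq> carrier R}"
  have "\<exists>K\<in>A. \<forall>Z\<in>A. K \<subseteq> Z \<longrightarrow> Z = K"
  proof (rule subset_Zorn_nonempty)
    show "A \<noteq> {}" using J unfolding A_def by blast
  next
    fix C assume C: "C \<noteq> {}" "subset.chain A C"
    hence ch: "subset.chain {I. ideal I R} C" unfolding subset_chain_def A_def by blast
    have "\<Union>C \<in> C" by (rule ideal_chain_is_trivial[OF C(1) ch])
    thus "\<Union>C \<in> A" using C(2) unfolding subset_chain_def by blast
  qed
  then obtain K where KA: "K \<in> A" and Km: "\<forall>Z\<in>A. K \<subseteq> Z \<longrightarrow> Z = K" by (elim bexE)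
  have "maximalideal K R"
  proof (rule maximalidealI)
    show "ideal K R" using KA unfolding A_def by simp
    show "carrier R \<noteq> K" using KA unfolding A_def by auto
    fix J' assume "ideal J' R" "K \<subseteq> J'" "J' \<subseteq> carrier R"
    thus "J' = K \<or> J' = carrier R" using Km KA unfolding A_def by blast
  qed
  hence "K = mm" using loc unfolding local_ring_with_def by blast
  thus ?thesis using KA unfolding A_def by blast
qed

lemma e0_ex: obtains e0 where "e0 \<in> carrier E" "{r \<in> carrier R. r \<odot>\<^bsub>E\<^esub> e0 = \<zero>\<^bsub>E\<^esub>} = mm"
  using hull unfolding injective_hull_residue_def by blast

lemma cogen:
  assumes P: "submodule P R M" and m: "m \<in> carrier M" "m \<notin> P"
  shows "\<exists>f\<in>lin_maps R M E. (\<forall>u\<in>P. f u = \<zero>\<^bsub>E\<^esub>) \<and> f m \<noteq> \<zero>\<^bsub>E\<^esub>"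
proof -
  obtain e0 where e0: "e0 \<in> carrier E" "{r \<in> carrier R. r \<odot>\<^bsub>E\<^esub> e0 = \<zero>\<^bsub>E\<^esub>} = mm" by (rule e0_ex)
  note Pd = M.submoduleD[OF P]
  define J where "J = {r \<in> carrier R. r \<odot>\<^bsub>M\<^esub> m \<in> P}"
  have "ideal J R"
  proof (rule idealI2)
    show "J \<subseteq> carrier R" unfolding J_def by auto
    show "\<zero>\<^bsub>R\<^esub> \<in> J" unfolding J_def using m Pd by simp
    show "a \<oplus>\<^bsub>R\<^esub> b \<in> J" if "a \<in> J" "b \<in> J" for a b
      using that m Pd unfolding J_def by (simp add: M.smult_l_distr)
    show "r \<otimes>\<^bsub>R\<^esub> a \<in> J" if "r \<in> carrier R" "a \<in> J" for r a
      using that m Pd unfolding J_def by (simp add: M.smult_assoc1)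
  qed
  moreover have "\<one>\<^bsub>R\<^esub> \<notin> J" using m unfolding J_def by simp
  hence "J \<noteq> carrier R" by blast
  ultimately have Jm: "J \<subseteq> mm" by (rule proper_in_mm)
  define G where "G = {(u \<oplus>\<^bsub>M\<^esub> r \<odot>\<^bsub>M\<^esub> m, r \<odot>\<^bsub>E\<^esub> e0) | u r. u \<in> P \<and> r \<in> carrier R}"
  have "lin_graph G"
  proof (rule lin_graphI)
    show "G \<subseteq> carrier M \<times> carrier E" unfolding G_def using Pd(1) m e0 by auto
    show "(\<zero>\<^bsub>M\<^esub>, \<zero>\<^bsub>E\<^esub>) \<in> G" unfolding G_def using Pd m e0
      by (auto intro!: exI[of _ "\<zero>\<^bsub>M\<^esub>"] exI[of _ "\<zero>\<^bsub>R\<^esub>"])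
  next
    fix a b a' b' assume "(a, b) \<in> G" "(a', b') \<in> G"
    then obtain x r x' r' where X: "a = x \<oplus>\<^bsub>M\<^esub> r \<odot>\<^bsub>M\<^esub> m" "b = r \<odot>\<^bsub>E\<^esub> e0" "x \<in> P" "r \<in> carrier R"
      "a' = x' \<oplus>\<^bsub>M\<^esub> r' \<odot>\<^bsub>M\<^esub> m" "b' = r' \<odot>\<^bsub>E\<^esub> e0" "x' \<in> P" "r' \<in> carrier R"
      unfolding G_def by blast
    have c: "x \<in> carrier M" "x' \<in> carrier M" using X Pd by auto
    have "a \<oplus>\<^bsub>M\<^esub> a' = (x \<oplus>\<^bsub>M\<^esub> x') \<oplus>\<^bsub>M\<^esub> (r \<oplus>\<^bsub>R\<^esub> r') \<odot>\<^bsub>M\<^esub> m"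
      using X c m by (simp add: M.smult_l_distr M.a_ac)
    moreover have "b \<oplus>\<^bsub>E\<^esub> b' = (r \<oplus>\<^bsub>R\<^esub> r') \<odot>\<^bsub>E\<^esub> e0"
      using X e0 by (simp add: E.smult_l_distr)
    moreover have "x \<oplus>\<^bsub>M\<^esub> x' \<in> P" "r \<oplus>\<^bsub>R\<^esub> r' \<in> carrier R" using X Pd by auto
    ultimately show "(a \<oplus>\<^bsub>M\<^esub> a', b \<oplus>\<^bsub>E\<^esub> b') \<in> G" unfolding G_def by blast
  next
    fix s a b assume s: "s \<in> carrier R" and "(a, b) \<in> G"
    then obtain x r where X: "a = x \<oplus>\<^bsub>M\<^esub> r \<odot>\<^bsub>M\<^esub> m" "b = r \<odot>\<^bsub>E\<^esub> e0" "x \<in> P" "r \<in> carrier R"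
      unfolding G_def by blast
    have c: "x \<in> carrier M" using X Pd by auto
    have "s \<odot>\<^bsub>M\<^esub> a = s \<odot>\<^bsub>M\<^esub> x \<oplus>\<^bsub>M\<^esub> (s \<otimes>\<^bsub>R\<^esub> r) \<odot>\<^bsub>M\<^esub> m"
      using X c m s by (simp add: M.smult_r_distr M.smult_assoc1)
    moreover have "s \<odot>\<^bsub>E\<^esub> b = (s \<otimes>\<^bsub>R\<^esub> r) \<odot>\<^bsub>E\<^esub> e0"
      using X e0 s by (simp add: E.smult_assoc1)
    moreover have "s \<odot>\<^bsub>M\<^esub> x \<in> P" "s \<otimes>\<^bsub>R\<^esub> r \<in> carrier R" using X Pd s by auto
    ultimately show "(s \<odot>\<^bsub>M\<^esub> a, s \<odot>\<^bsub>E\<^esub> b) \<in> G" unfolding G_def by blast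
  next
    fix b assume "(\<zero>\<^bsub>M\<^esub>, b) \<in> G"
    then obtain x r where X: "\<zero>\<^bsub>M\<^esub> = x \<oplus>\<^bsub>M\<^esub> r \<odot>\<^bsub>M\<^esub> m" "b = r \<odot>\<^bsub>E\<^esub> e0" "x \<in> P" "r \<in> carrier R"
      unfolding G_def by blast
    have c: "x \<in> carrier M" using X Pd by auto
    have "r \<odot>\<^bsub>M\<^esub> m = \<ominus>\<^bsub>M\<^esub> x" using X(1) c m X(4)
      by (metis M.add.inv_equality M.smult_closed M.a_comm)
    hence "r \<in> J" using X Pd unfolding J_def by auto
    hence "r \<in> mm" using Jm by blast
    thus "b = \<zero>\<^bsub>E\<^esub>" using X(2) e0(2) by blast
  qed
  then obtain f where f: "f \<in> lin_maps R M E" "\<forall>a b. (a,b) \<in> G \<longrightarrow> f a = b" using extend_graph by blast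
  have "f u = \<zero>\<^bsub>E\<^esub>" if u: "u \<in> P" for u
  proof -
    have "(u \<oplus>\<^bsub>M\<^esub> \<zero>\<^bsub>R\<^esub> \<odot>\<^bsub>M\<^esub> m, \<zero>\<^bsub>R\<^esub> \<odot>\<^bsub>E\<^esub> e0) \<in> G" unfolding G_def using u by blast
    moreover have "u \<in> carrier M" using u Pd(1) by blast
    ultimately have "(u, \<zero>\<^bsub>E\<^esub>) \<in> G" using m e0 by simp
    thus ?thesis using f(2) by blast
  qed
  moreover have "f m = e0"
  proof -
    have "(\<zero>\<^bsub>M\<^esub> \<oplus>\<^bsub>M\<^esub> \<one>\<^bsub>R\<^esub> \<odot>\<^bsub>M\<^esub> m, \<one>\<^bsub>R\<^esub> \<odot>\<^bsub>E\<^esub> e0) \<in> G" unfolding G_def using Pd by blast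
    hence "(m, e0) \<in> G" using m e0 by simp
    thus ?thesis using f(2) by blast
  qed
  moreover have "e0 \<noteq> \<zero>\<^bsub>E\<^esub>"
  proof
    assume "e0 = \<zero>\<^bsub>E\<^esub>"
    hence "carrier R \<subseteq> mm" using e0 by auto
    moreover have "mm \<subseteq> carrier R"
      using ideal.Icarr[OF maximalideal.axioms(1)[OF mm_max]] by blast
    ultimately show False using maximalideal.I_notcarr[OF mm_max] by blast
  qed
  ultimately show ?thesis using f(1) by blast
qed

end


context fullctx begin

lemma ann_ideal:
  assumes N: "module R N" and z: "z \<in> carrier N"
  shows "ideal {r \<in> carrier R. r \<odot>\<^bsub>N\<^esub> z = \<zero>\<^bsub>N\<^esub>} R"
proof -
  interpret N: module R N by (rule N)
  show ?thesis
  proof (rule idealI2)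
    show "{r \<in> carrier R. r \<odot>\<^bsub>N\<^esub> z = \<zero>\<^bsub>N\<^esub>} \<subseteq> carrier R" by auto
    show "\<zero>\<^bsub>R\<^esub> \<in> {r \<in> carrier R. r \<odot>\<^bsub>N\<^esub> z = \<zero>\<^bsub>N\<^esub>}" using z by simp
    show "a \<oplus>\<^bsub>R\<^esub> b \<in> {r \<in> carrier R. r \<odot>\<^bsub>N\<^esub> z = \<zero>\<^bsub>N\<^esub>}"
      if "a \<in> {r \<in> carrier R. r \<odot>\<^bsub>N\<^esub> z = \<zero>\<^bsub>N\<^esub>}" "b \<in> {r \<in> carrier R. r \<odot>\<^bsub>N\<^esub> z = \<zero>\<^bsub>N\<^esub>}" for a b
      using that z by (simp add: N.smult_l_distr)
    show "r \<otimes>\<^bsub>R\<^esub> a \<in> {r \<in> carrier R. r \<odot>\<^bsub>N\<^esub> z = \<zero>\<^bsub>N\<^esub>}"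
      if "r \<in> carrier R" "a \<in> {r \<in> carrier R. r \<odot>\<^bsub>N\<^esub> z = \<zero>\<^bsub>N\<^esub>}" for r a
      using that z by (simp add: N.smult_assoc1)
  qed
qed

lemma max_ann:
  assumes N: "module R N" and Zc: "Z \<subseteq> carrier N"
    and Zsm: "\<And>r z. r \<in> carrier R \<Longrightarrow> z \<in> Z \<Longrightarrow> r \<odot>\<^bsub>N\<^esub> z \<in> Z"
    and z1: "z1 \<in> Z" "z1 \<noteq> \<zero>\<^bsub>N\<^esub>"
    and annp: "\<And>z. z \<in> Z \<Longrightarrow> z \<noteq> \<zero>\<^bsub>N\<^esub> \<Longrightarrow> {r \<in> carrier R. r \<odot>\<^bsub>N\<^esub> z = \<zero>\<^bsub>N\<^esub>} \<subseteq> p"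
    and nilp: "\<And>x z. x \<in> p \<Longrightarrow> z \<in> Z \<Longrightarrow> \<exists>k::nat. (x [^]\<^bsub>R\<^esub> k) \<odot>\<^bsub>N\<^esub> z = \<zero>\<^bsub>N\<^esub>"
    and pc: "p \<subseteq> carrier R"
  shows "\<exists>z\<in>Z. {r \<in> carrier R. r \<odot>\<^bsub>N\<^esub> z = \<zero>\<^bsub>N\<^esub>} = p"
proof -
  interpret N: module R N by (rule N)
  define ann where "ann z = {r \<in> carrier R. r \<odot>\<^bsub>N\<^esub> z = \<zero>\<^bsub>N\<^esub>}" for z
  define S where "S = {ann z | z. z \<in> Z \<and> z \<noteq> \<zero>\<^bsub>N\<^esub>}"
  have "\<exists>K\<in>S. \<forall>Y\<in>S. K \<subseteq> Y \<longrightarrow> Y = K"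
  proof (rule subset_Zorn_nonempty)
    show "S \<noteq> {}" using z1 unfolding S_def by blast
  next
    fix C assume C: "C \<noteq> {}" "subset.chain S C"
    have "S \<subseteq> {I. ideal I R}" unfolding S_def ann_def using ann_ideal[OF N] Zc by blast
    hence ch: "subset.chain {I. ideal I R} C" using C(2) unfolding subset_chain_def by blast
    have "\<Union>C \<in> C" by (rule ideal_chain_is_trivial[OF C(1) ch])
    thus "\<Union>C \<in> S" using C(2) unfolding subset_chain_def by blast
  qed
  then obtain K where KS: "K \<in> S" and Km: "\<forall>Y\<in>S. K \<subseteq> Y \<longrightarrow> Y = K" by (elim bexE)
  then obtain n where n: "n \<in> Z" "n \<noteq> \<zero>\<^bsub>N\<^esub>" "K = ann n" unfolding S_def by blast
  have nc: "n \<in> carrier N" using n Zc by blast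
  have "p \<subseteq> ann n"
  proof
    fix x assume x: "x \<in> p"
    hence xc: "x \<in> carrier R" using pc by blast
    obtain k :: nat where k: "(x [^]\<^bsub>R\<^esub> k) \<odot>\<^bsub>N\<^esub> n = \<zero>\<^bsub>N\<^esub>" using nilp[OF x n(1)] by blast
    define k0 where "k0 = (LEAST k::nat. (x [^]\<^bsub>R\<^esub> k) \<odot>\<^bsub>N\<^esub> n = \<zero>\<^bsub>N\<^esub>)"
    have k0: "(x [^]\<^bsub>R\<^esub> k0) \<odot>\<^bsub>N\<^esub> n = \<zero>\<^bsub>N\<^esub>" unfolding k0_def using k by (rule LeastI)
    have "k0 \<noteq> 0"
    proof
      assume "k0 = 0"
      hence "(x [^]\<^bsub>R\<^esub> k0) \<odot>\<^bsub>N\<^esub> n = n" using nc by simp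
      thus False using k0 n(2) by simp
    qed
    then obtain j :: nat where j: "k0 = Suc j" using not0_implies_Suc by blast
    define z' where "z' = (x [^]\<^bsub>R\<^esub> j) \<odot>\<^bsub>N\<^esub> n"
    have z'Z: "z' \<in> Z" unfolding z'_def using Zsm n(1) xc by simp
    have z'0: "z' \<noteq> \<zero>\<^bsub>N\<^esub>"
    proof
      assume "z' = \<zero>\<^bsub>N\<^esub>"
      hence "k0 \<le> j" unfolding k0_def z'_def by (rule Least_le)
      thus False using j by simp
    qed
    have "ann n \<subseteq> ann z'"
    proof
      fix r assume "r \<in> ann n"
      hence r: "r \<in> carrier R" "r \<odot>\<^bsub>N\<^esub> n = \<zero>\<^bsub>N\<^esub>" unfolding ann_def by auto
      have "r \<odot>\<^bsub>N\<^esub> z' = (r \<otimes>\<^bsub>R\<^esub> x [^]\<^bsub>R\<^esub> j) \<odot>\<^bsub>N\<^esub> n" unfolding z'_def using r xc nc by (simp add: N.smult_assoc1)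
      also have "\<dots> = (x [^]\<^bsub>R\<^esub> j \<otimes>\<^bsub>R\<^esub> r) \<odot>\<^bsub>N\<^esub> n" using r xc by (simp add: m_comm)
      also have "\<dots> = \<zero>\<^bsub>N\<^esub>" using r xc nc by (simp add: N.smult_assoc1)
      finally show "r \<in> ann z'" unfolding ann_def using r by simp
    qed
    moreover have "ann z' \<in> S" unfolding S_def using z'Z z'0 by blast
    ultimately have eq: "ann z' = ann n" using Km n(3) by blast
    have "x \<odot>\<^bsub>N\<^esub> z' = (x [^]\<^bsub>R\<^esub> k0) \<odot>\<^bsub>N\<^esub> n"
      unfolding z'_def j using xc nc by (simp add: N.smult_assoc1[symmetric] m_comm)
    hence "x \<in> ann z'" unfolding ann_def using k0 xc by simp
    thus "x \<in> ann n" using eq by simp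
  qed
  moreover have "ann n \<subseteq> p" unfolding ann_def using annp n by blast
  ultimately show ?thesis using n unfolding ann_def by blast
qed

end


context fullctx begin

lemma D_app:
  "(f \<oplus>\<^bsub>D\<^esub> g) x = (if x \<in> carrier M then f x \<oplus>\<^bsub>E\<^esub> g x else undefined)"
  "(r \<odot>\<^bsub>D\<^esub> f) x = (if x \<in> carrier M then r \<odot>\<^bsub>E\<^esub> f x else undefined)"
  "\<zero>\<^bsub>D\<^esub> x = (if x \<in> carrier M then \<zero>\<^bsub>E\<^esub> else undefined)"
  unfolding D_simps by auto

lemma D_zero_lin: "\<zero>\<^bsub>D\<^esub> \<in> lin_maps R M E"
  unfolding D_simps by (intro linI) auto

lemma D_eq_zero_iff:
  assumes "f \<in> lin_maps R M E"
  shows "f = \<zero>\<^bsub>D\<^esub> \<longleftrightarrow> (\<forall>x\<in>carrier M. f x = \<zero>\<^bsub>E\<^esub>)"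
proof
  assume "f = \<zero>\<^bsub>D\<^esub>" thus "\<forall>x\<in>carrier M. f x = \<zero>\<^bsub>E\<^esub>" by (simp add: D_app)
next
  assume "\<forall>x\<in>carrier M. f x = \<zero>\<^bsub>E\<^esub>"
  thus "f = \<zero>\<^bsub>D\<^esub>" using lin_eqI[OF assms D_zero_lin] by (simp add: D_app)
qed

lemma smult_D_lin: "r \<in> carrier R \<Longrightarrow> f \<in> lin_maps R M E \<Longrightarrow> r \<odot>\<^bsub>D\<^esub> f \<in> lin_maps R M E"
  using module.smult_closed[OF D_module] D_simps(1) by metis

lemma smult_D_zero_iff:
  assumes "r \<in> carrier R" "f \<in> lin_maps R M E"
  shows "r \<odot>\<^bsub>D\<^esub> f = \<zero>\<^bsub>D\<^esub> \<longleftrightarrow> (\<forall>x\<in>carrier M. f (r \<odot>\<^bsub>M\<^esub> x) = \<zero>\<^bsub>E\<^esub>)"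
proof -
  have "\<And>x. x \<in> carrier M \<Longrightarrow> (r \<odot>\<^bsub>D\<^esub> f) x = f (r \<odot>\<^bsub>M\<^esub> x)"
    using assms linD(4)[OF assms(2)] by (simp add: D_app)
  thus ?thesis using D_eq_zero_iff[OF smult_D_lin[OF assms]] by simp
qed

lemma prime_one:
  assumes p: "primeideal p R" shows "\<one>\<^bsub>R\<^esub> \<notin> p"
proof
  assume "\<one>\<^bsub>R\<^esub> \<in> p"
  hence "p = carrier R" by (rule ideal.one_imp_carrier[OF primeideal.axioms(1)[OF p]])
  thus False using primeideal.I_notcarr[OF p] by simp
qed

lemma prime_carrier:
  assumes p: "primeideal p R" shows "p \<subseteq> carrier R"
  by (rule subsetI) (rule ideal.Icarr[OF primeideal.axioms(1)[OF p]])

lemma prime_pow: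
  assumes p: "primeideal p R" and x: "x \<in> carrier R" "x \<notin> p"
  shows "x [^]\<^bsub>R\<^esub> (k::nat) \<notin> p"
proof (induction k)
  case 0 thus ?case using prime_one[OF p] by simp
next
  case (Suc k)
  show ?case
  proof
    assume "x [^]\<^bsub>R\<^esub> Suc k \<in> p"
    hence "x [^]\<^bsub>R\<^esub> k \<otimes>\<^bsub>R\<^esub> x \<in> p" by simp
    moreover have "x [^]\<^bsub>R\<^esub> k \<in> carrier R" using x by simp
    ultimately have "x [^]\<^bsub>R\<^esub> k \<in> p \<or> x \<in> p" using primeideal.I_prime[OF p] x by blast
    thus False using Suc x by blast
  qed
qed

lemma prime_mult:
  assumes p: "primeideal p R" and "a \<in> carrier R" "a \<notin> p" "b \<in> carrier R" "b \<notin> p"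
  shows "a \<otimes>\<^bsub>R\<^esub> b \<notin> p"
  using primeideal.I_prime[OF p] assms by blast

lemma zero_submod: "submodule {\<zero>\<^bsub>M\<^esub>} R M"
  by (rule M.submoduleI2) auto

lemma AssD_sub_AttM: "Ass R D \<subseteq> Att R M"
proof
  fix p assume "p \<in> Ass R D"
  then obtain f where p: "primeideal p R" and f: "f \<in> carrier D" and pf: "p = {r \<in> carrier R. r \<odot>\<^bsub>D\<^esub> f = \<zero>\<^bsub>D\<^esub>}"
    unfolding Ass_def by blast
  have fl: "f \<in> lin_maps R M E" using f D_simps by simp
  define U where "U = {m \<in> carrier M. f m = \<zero>\<^bsub>E\<^esub>}"
  have "submodule U R M"
  proof (rule M.submoduleI2)
    show "U \<subseteq> carrier M" unfolding U_def by auto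
    show "\<zero>\<^bsub>M\<^esub> \<in> U" unfolding U_def using lin_zero[OF fl] by simp
    show "a \<oplus>\<^bsub>M\<^esub> b \<in> U" if "a \<in> U" "b \<in> U" for a b using that unfolding U_def by (simp add: linD[OF fl])
    show "r \<odot>\<^bsub>M\<^esub> a \<in> U" if "r \<in> carrier R" "a \<in> U" for r a using that unfolding U_def by (simp add: linD[OF fl])
  qed
  moreover have "p = {r \<in> carrier R. \<forall>n\<in>carrier M. r \<odot>\<^bsub>M\<^esub> n \<in> U}"
    unfolding pf U_def using smult_D_zero_iff[OF _ fl] by auto
  ultimately show "p \<in> Att R M" unfolding Att_def using p by blast
qed

lemma AssM_sub_AttD: "Ass R M \<subseteq> Att R D"
proof
  fix p assume "p \<in> Ass R M"
  then obtain n where p: "primeideal p R" and n: "n \<in> carrier M" and pn: "p = {r \<in> carrier R. r \<odot>\<^bsub>M\<^esub> n = \<zero>\<^bsub>M\<^esub>}"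
    unfolding Ass_def by blast
  define V where "V = {g \<in> carrier D. g n = \<zero>\<^bsub>E\<^esub>}"
  interpret DM: module R D by (rule D_module)
  have "submodule V R D"
  proof (rule DM.submoduleI2)
    show "V \<subseteq> carrier D" unfolding V_def by auto
    show "\<zero>\<^bsub>D\<^esub> \<in> V" unfolding V_def using n by (simp add: D_app)
    show "a \<oplus>\<^bsub>D\<^esub> b \<in> V" if "a \<in> V" "b \<in> V" for a b using that n unfolding V_def by (simp add: D_app)
    show "r \<odot>\<^bsub>D\<^esub> a \<in> V" if "r \<in> carrier R" "a \<in> V" for r a using that n unfolding V_def by (simp add: D_app)
  qed
  moreover have "p = {r \<in> carrier R. \<forall>g\<in>carrier D. r \<odot>\<^bsub>D\<^esub> g \<in> V}"
  proof (intro Set.set_eqI iffI)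
    fix r assume "r \<in> p"
    hence r: "r \<in> carrier R" "r \<odot>\<^bsub>M\<^esub> n = \<zero>\<^bsub>M\<^esub>" using pn by auto
    have "r \<odot>\<^bsub>D\<^esub> g \<in> V" if g: "g \<in> carrier D" for g
    proof -
      have gl: "g \<in> lin_maps R M E" using g D_simps by simp
      have "(r \<odot>\<^bsub>D\<^esub> g) n = g (r \<odot>\<^bsub>M\<^esub> n)" using n r(1) linD(4)[OF gl r(1) n] by (simp add: D_app)
      also have "\<dots> = \<zero>\<^bsub>E\<^esub>" using r lin_zero[OF gl] by simp
      finally show ?thesis unfolding V_def using r g by simp
    qed
    thus "r \<in> {r \<in> carrier R. \<forall>g\<in>carrier D. r \<odot>\<^bsub>D\<^esub> g \<in> V}" using r by blast
  next
    fix r assume "r \<in> {r \<in> carrier R. \<forall>g\<in>carrier D. r \<odot>\<^bsub>D\<^esub> g \<in> V}"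
    hence r: "r \<in> carrier R" and rg: "\<And>g. g \<in> carrier D \<Longrightarrow> (r \<odot>\<^bsub>D\<^esub> g) n = \<zero>\<^bsub>E\<^esub>" unfolding V_def by auto
    show "r \<in> p"
    proof (rule ccontr)
      assume "r \<notin> p"
      hence rn: "r \<odot>\<^bsub>M\<^esub> n \<notin> {\<zero>\<^bsub>M\<^esub>}" using pn r by auto
      obtain f where f: "f \<in> lin_maps R M E" "f (r \<odot>\<^bsub>M\<^esub> n) \<noteq> \<zero>\<^bsub>E\<^esub>"
        using cogen[OF zero_submod _ rn] r n by auto
      have "(r \<odot>\<^bsub>D\<^esub> f) n = f (r \<odot>\<^bsub>M\<^esub> n)" using n r by (simp add: D_app linD[OF f(1)])
      thus False using rg[of f] f D_simps by simp
    qed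
  qed
  ultimately show "p \<in> Att R D" unfolding Att_def using p by blast
qed

end


context fullctx begin

lemma Dc: "f \<in> carrier D \<longleftrightarrow> f \<in> lin_maps R M E" by (simp add: D_simps)

lemma split_step:
  assumes A: "submodule A R M" and B: "submodule B R M" and f: "f \<in> lin_maps R M E"
    and fz: "\<And>y. y \<in> A \<Longrightarrow> y \<in> B \<Longrightarrow> f y = \<zero>\<^bsub>E\<^esub>"
  shows "\<exists>h\<in>lin_maps R M E. (\<forall>a\<in>A. h a = f a) \<and> (\<forall>b\<in>B. h b = \<zero>\<^bsub>E\<^esub>)"
proof -
  note Ad = M.submoduleD[OF A] and Bd = M.submoduleD[OF B] and fd = linD[OF f]
  define G where "G = {(a \<oplus>\<^bsub>M\<^esub> b, f a) | a b. a \<in> A \<and> b \<in> B}"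
  have "lin_graph G"
  proof (rule lin_graphI)
    show "G \<subseteq> carrier M \<times> carrier E" unfolding G_def using Ad(1) Bd(1) fd by auto
    have "(\<zero>\<^bsub>M\<^esub> \<oplus>\<^bsub>M\<^esub> \<zero>\<^bsub>M\<^esub>, f \<zero>\<^bsub>M\<^esub>) \<in> G" unfolding G_def using Ad Bd by blast
    thus "(\<zero>\<^bsub>M\<^esub>, \<zero>\<^bsub>E\<^esub>) \<in> G" using lin_zero[OF f] by simp
  next
    fix a b a' b' assume "(a, b) \<in> G" "(a', b') \<in> G"
    then obtain x y x' y' where X: "a = x \<oplus>\<^bsub>M\<^esub> y" "b = f x" "x \<in> A" "y \<in> B"
      "a' = x' \<oplus>\<^bsub>M\<^esub> y'" "b' = f x'" "x' \<in> A" "y' \<in> B" unfolding G_def by blast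
    have c: "x \<in> carrier M" "y \<in> carrier M" "x' \<in> carrier M" "y' \<in> carrier M" using X Ad(1) Bd(1) by auto
    have "a \<oplus>\<^bsub>M\<^esub> a' = (x \<oplus>\<^bsub>M\<^esub> x') \<oplus>\<^bsub>M\<^esub> (y \<oplus>\<^bsub>M\<^esub> y')" using X c by (simp add: M.a_ac)
    moreover have "b \<oplus>\<^bsub>E\<^esub> b' = f (x \<oplus>\<^bsub>M\<^esub> x')" using X c fd by simp
    moreover have "x \<oplus>\<^bsub>M\<^esub> x' \<in> A" "y \<oplus>\<^bsub>M\<^esub> y' \<in> B" using X Ad Bd by auto
    ultimately show "(a \<oplus>\<^bsub>M\<^esub> a', b \<oplus>\<^bsub>E\<^esub> b') \<in> G" unfolding G_def by blast
  next
    fix r a b assume r: "r \<in> carrier R" and "(a, b) \<in> G"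
    then obtain x y where X: "a = x \<oplus>\<^bsub>M\<^esub> y" "b = f x" "x \<in> A" "y \<in> B" unfolding G_def by blast
    have c: "x \<in> carrier M" "y \<in> carrier M" using X Ad(1) Bd(1) by auto
    have "r \<odot>\<^bsub>M\<^esub> a = r \<odot>\<^bsub>M\<^esub> x \<oplus>\<^bsub>M\<^esub> r \<odot>\<^bsub>M\<^esub> y" using X c r by (simp add: M.smult_r_distr)
    moreover have "r \<odot>\<^bsub>E\<^esub> b = f (r \<odot>\<^bsub>M\<^esub> x)" using X c r fd by simp
    moreover have "r \<odot>\<^bsub>M\<^esub> x \<in> A" "r \<odot>\<^bsub>M\<^esub> y \<in> B" using X Ad Bd r by auto
    ultimately show "(r \<odot>\<^bsub>M\<^esub> a, r \<odot>\<^bsub>E\<^esub> b) \<in> G" unfolding G_def by blast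
  next
    fix b assume "(\<zero>\<^bsub>M\<^esub>, b) \<in> G"
    then obtain x y where X: "\<zero>\<^bsub>M\<^esub> = x \<oplus>\<^bsub>M\<^esub> y" "b = f x" "x \<in> A" "y \<in> B" unfolding G_def by blast
    have c: "x \<in> carrier M" "y \<in> carrier M" using X Ad(1) Bd(1) by auto
    have "x = \<ominus>\<^bsub>M\<^esub> y" using X(1) c by (metis M.add.inv_equality M.a_comm)
    hence "x \<in> B" using Bd X by simp
    thus "b = \<zero>\<^bsub>E\<^esub>" using fz X by simp
  qed
  then obtain h where h: "h \<in> lin_maps R M E" "\<forall>a b. (a,b) \<in> G \<longrightarrow> h a = b" using extend_graph by blast
  have "h a = f a" if a: "a \<in> A" for a
  proof -
    have "(a \<oplus>\<^bsub>M\<^esub> \<zero>\<^bsub>M\<^esub>, f a) \<in> G" unfolding G_def using a Bd by blast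
    moreover have "a \<in> carrier M" using a Ad by blast
    ultimately have "(a, f a) \<in> G" by simp
    thus ?thesis using h(2) by blast
  qed
  moreover have "h b = \<zero>\<^bsub>E\<^esub>" if b: "b \<in> B" for b
  proof -
    have "(\<zero>\<^bsub>M\<^esub> \<oplus>\<^bsub>M\<^esub> b, f \<zero>\<^bsub>M\<^esub>) \<in> G" unfolding G_def using b Ad by blast
    moreover have "b \<in> carrier M" using b Bd by blast
    ultimately have "(b, \<zero>\<^bsub>E\<^esub>) \<in> G" using lin_zero[OF f] by simp
    thus ?thesis using h(2) by blast
  qed
  ultimately show ?thesis using h(1) by blast
qed

lemma surj_lemma:
  assumes U: "submodule U R M" and x: "x \<in> carrier R"
    and xinj: "\<And>n. n \<in> carrier M \<Longrightarrow> x \<odot>\<^bsub>M\<^esub> n \<in> U \<Longrightarrow> n \<in> U"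
    and g: "g \<in> lin_maps R M E" and gU: "\<And>u. u \<in> U \<Longrightarrow> g u = \<zero>\<^bsub>E\<^esub>"
  shows "\<exists>h\<in>lin_maps R M E. x \<odot>\<^bsub>D\<^esub> h = g"
proof -
  note Ud = M.submoduleD[OF U] and gd = linD[OF g]
  define G where "G = {(x \<odot>\<^bsub>M\<^esub> m \<oplus>\<^bsub>M\<^esub> u, g m) | m u. m \<in> carrier M \<and> u \<in> U}"
  have "lin_graph G"
  proof (rule lin_graphI)
    show "G \<subseteq> carrier M \<times> carrier E" unfolding G_def using Ud(1) gd x by auto
    have "(x \<odot>\<^bsub>M\<^esub> \<zero>\<^bsub>M\<^esub> \<oplus>\<^bsub>M\<^esub> \<zero>\<^bsub>M\<^esub>, g \<zero>\<^bsub>M\<^esub>) \<in> G" unfolding G_def using Ud by blast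
    thus "(\<zero>\<^bsub>M\<^esub>, \<zero>\<^bsub>E\<^esub>) \<in> G" using lin_zero[OF g] x by simp
  next
    fix a b a' b' assume "(a, b) \<in> G" "(a', b') \<in> G"
    then obtain m u m' u' where X: "a = x \<odot>\<^bsub>M\<^esub> m \<oplus>\<^bsub>M\<^esub> u" "b = g m" "m \<in> carrier M" "u \<in> U"
      "a' = x \<odot>\<^bsub>M\<^esub> m' \<oplus>\<^bsub>M\<^esub> u'" "b' = g m'" "m' \<in> carrier M" "u' \<in> U" unfolding G_def by blast
    have c: "u \<in> carrier M" "u' \<in> carrier M" using X Ud(1) by auto
    have "a \<oplus>\<^bsub>M\<^esub> a' = x \<odot>\<^bsub>M\<^esub> (m \<oplus>\<^bsub>M\<^esub> m') \<oplus>\<^bsub>M\<^esub> (u \<oplus>\<^bsub>M\<^esub> u')"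
      using X c x by (simp add: M.a_ac M.smult_r_distr)
    moreover have "b \<oplus>\<^bsub>E\<^esub> b' = g (m \<oplus>\<^bsub>M\<^esub> m')" using X gd by simp
    moreover have "m \<oplus>\<^bsub>M\<^esub> m' \<in> carrier M" "u \<oplus>\<^bsub>M\<^esub> u' \<in> U" using X Ud by auto
    ultimately show "(a \<oplus>\<^bsub>M\<^esub> a', b \<oplus>\<^bsub>E\<^esub> b') \<in> G" unfolding G_def by blast
  next
    fix r a b assume r: "r \<in> carrier R" and "(a, b) \<in> G"
    then obtain m u where X: "a = x \<odot>\<^bsub>M\<^esub> m \<oplus>\<^bsub>M\<^esub> u" "b = g m" "m \<in> carrier M" "u \<in> U" unfolding G_def by blast
    have c: "u \<in> carrier M" using X Ud(1) by auto
    have "r \<odot>\<^bsub>M\<^esub> a = x \<odot>\<^bsub>M\<^esub> (r \<odot>\<^bsub>M\<^esub> m) \<oplus>\<^bsub>M\<^esub> r \<odot>\<^bsub>M\<^esub> u"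
      using X c r x by (simp add: M.smult_r_distr M.smult_assoc1[symmetric] m_comm)
    moreover have "r \<odot>\<^bsub>E\<^esub> b = g (r \<odot>\<^bsub>M\<^esub> m)" using X r gd by simp
    moreover have "r \<odot>\<^bsub>M\<^esub> m \<in> carrier M" "r \<odot>\<^bsub>M\<^esub> u \<in> U" using X Ud r by auto
    ultimately show "(r \<odot>\<^bsub>M\<^esub> a, r \<odot>\<^bsub>E\<^esub> b) \<in> G" unfolding G_def by blast
  next
    fix b assume "(\<zero>\<^bsub>M\<^esub>, b) \<in> G"
    then obtain m u where X: "\<zero>\<^bsub>M\<^esub> = x \<odot>\<^bsub>M\<^esub> m \<oplus>\<^bsub>M\<^esub> u" "b = g m" "m \<in> carrier M" "u \<in> U" unfolding G_def by blast
    have c: "u \<in> carrier M" "x \<odot>\<^bsub>M\<^esub> m \<in> carrier M" using X Ud(1) x by auto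
    have "x \<odot>\<^bsub>M\<^esub> m = \<ominus>\<^bsub>M\<^esub> u" using X(1) c by (metis M.add.inv_equality M.a_comm)
    hence "x \<odot>\<^bsub>M\<^esub> m \<in> U" using Ud X by simp
    hence "m \<in> U" using xinj X by blast
    thus "b = \<zero>\<^bsub>E\<^esub>" using gU X by simp
  qed
  then obtain h where h: "h \<in> lin_maps R M E" "\<forall>a b. (a,b) \<in> G \<longrightarrow> h a = b" using extend_graph by blast
  have "h (x \<odot>\<^bsub>M\<^esub> m) = g m" if m: "m \<in> carrier M" for m
  proof -
    have "(x \<odot>\<^bsub>M\<^esub> m \<oplus>\<^bsub>M\<^esub> \<zero>\<^bsub>M\<^esub>, g m) \<in> G" unfolding G_def using m Ud by blast
    hence "(x \<odot>\<^bsub>M\<^esub> m, g m) \<in> G" using m x by simp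
    thus ?thesis using h(2) by blast
  qed
  hence "x \<odot>\<^bsub>D\<^esub> h = g"
    using lin_eqI[OF smult_D_lin[OF x h(1)] g] x linD(4)[OF h(1) x] by (simp add: D_app)
  thus ?thesis using h(1) by blast
qed

lemma inter_submod:
  assumes "\<forall>U\<in>set Vs. submodule U R M"
  shows "submodule (carrier M \<inter> \<Inter>(set Vs)) R M"
proof (rule M.submoduleI2)
  show "carrier M \<inter> \<Inter>(set Vs) \<subseteq> carrier M" by blast
  show "\<zero>\<^bsub>M\<^esub> \<in> carrier M \<inter> \<Inter>(set Vs)" using assms M.submoduleD(2) by blast
  show "a \<oplus>\<^bsub>M\<^esub> b \<in> carrier M \<inter> \<Inter>(set Vs)" if "a \<in> carrier M \<inter> \<Inter>(set Vs)" "b \<in> carrier M \<inter> \<Inter>(set Vs)" for a b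
    using that assms M.submoduleD(3) by auto
  show "r \<odot>\<^bsub>M\<^esub> a \<in> carrier M \<inter> \<Inter>(set Vs)" if "r \<in> carrier R" "a \<in> carrier M \<inter> \<Inter>(set Vs)" for r a
    using that assms M.submoduleD(5) by auto
qed

end


context fullctx begin

lemma split_list:
  assumes p: "primeideal p R" and V: "submodule V R D"
  shows "(\<forall>U\<in>set Vs. submodule U R M \<and> (\<exists>a\<in>carrier R. a \<notin> p \<and>
            (\<forall>g\<in>carrier D. (\<forall>u\<in>U. g u = \<zero>\<^bsub>E\<^esub>) \<longrightarrow> a \<odot>\<^bsub>D\<^esub> g \<in> V))) \<Longrightarrow>
         \<exists>a\<in>carrier R. a \<notin> p \<and> (\<forall>f\<in>carrier D. (\<forall>y\<in>carrier M \<inter> \<Inter>(set Vs). f y = \<zero>\<^bsub>E\<^esub>) \<longrightarrow> a \<odot>\<^bsub>D\<^esub> f \<in> V)"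
proof (induction Vs)
  interpret DM: module R D by (rule D_module)
  note Vd = DM.submoduleD[OF V]
  {
    case Nil
    have "\<one>\<^bsub>R\<^esub> \<odot>\<^bsub>D\<^esub> f \<in> V" if f: "f \<in> carrier D" "\<forall>y\<in>carrier M \<inter> \<Inter>(set []). f y = \<zero>\<^bsub>E\<^esub>" for f
    proof -
      have "f = \<zero>\<^bsub>D\<^esub>" using D_eq_zero_iff f Dc by auto
      thus ?thesis using Vd(2) by simp
    qed
    thus ?case using prime_one[OF p] by blast
  next
    case (Cons U Vs)
    from Cons.prems have U: "submodule U R M" and aU: "\<exists>a\<in>carrier R. a \<notin> p \<and>
            (\<forall>g\<in>carrier D. (\<forall>u\<in>U. g u = \<zero>\<^bsub>E\<^esub>) \<longrightarrow> a \<odot>\<^bsub>D\<^esub> g \<in> V)" by auto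
    from Cons.prems have Vs: "\<forall>U\<in>set Vs. submodule U R M" by auto
    from Cons.prems obtain a' where a': "a' \<in> carrier R" "a' \<notin> p"
      "\<And>f. f \<in> carrier D \<Longrightarrow> (\<forall>y\<in>carrier M \<inter> \<Inter>(set Vs). f y = \<zero>\<^bsub>E\<^esub>) \<Longrightarrow> a' \<odot>\<^bsub>D\<^esub> f \<in> V"
      using Cons.IH by auto
    from aU obtain a where a: "a \<in> carrier R" "a \<notin> p"
      "\<And>g. g \<in> carrier D \<Longrightarrow> (\<forall>u\<in>U. g u = \<zero>\<^bsub>E\<^esub>) \<Longrightarrow> a \<odot>\<^bsub>D\<^esub> g \<in> V" by blast
    define B where "B = carrier M \<inter> \<Inter>(set Vs)"
    have B: "submodule B R M" unfolding B_def using inter_submod[OF Vs] .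
    note Ud = M.submoduleD[OF U]
    have "(a \<otimes>\<^bsub>R\<^esub> a') \<odot>\<^bsub>D\<^esub> f \<in> V"
      if f: "f \<in> carrier D" "\<forall>y\<in>carrier M \<inter> \<Inter>(set (U # Vs)). f y = \<zero>\<^bsub>E\<^esub>" for f
    proof -
      have fl: "f \<in> lin_maps R M E" using f Dc by simp
      have "\<And>y. y \<in> U \<Longrightarrow> y \<in> B \<Longrightarrow> f y = \<zero>\<^bsub>E\<^esub>" using f(2) unfolding B_def by auto
      then obtain h where h: "h \<in> lin_maps R M E" "\<forall>u\<in>U. h u = f u" "\<forall>b\<in>B. h b = \<zero>\<^bsub>E\<^esub>"
        using split_step[OF U B fl] by blast
      have hD: "h \<in> carrier D" using h Dc by simp
      define g where "g = f \<oplus>\<^bsub>D\<^esub> ((\<ominus>\<^bsub>R\<^esub> \<one>\<^bsub>R\<^esub>) \<odot>\<^bsub>D\<^esub> h)"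
      have gD: "g \<in> carrier D" unfolding g_def using f(1) hD by simp
      have gU: "\<forall>u\<in>U. g u = \<zero>\<^bsub>E\<^esub>"
      proof
        fix u assume u: "u \<in> U"
        hence uc: "u \<in> carrier M" using Ud by blast
        have fu: "f u \<in> carrier E" using linD(2)[OF fl uc] .
        have "g u = f u \<oplus>\<^bsub>E\<^esub> ((\<ominus>\<^bsub>R\<^esub> \<one>\<^bsub>R\<^esub>) \<odot>\<^bsub>E\<^esub> h u)" unfolding g_def using uc by (simp add: D_app)
        also have "\<dots> = f u \<oplus>\<^bsub>E\<^esub> \<ominus>\<^bsub>E\<^esub> f u" using h(2) u fu by (simp add: E.smult_l_minus)
        also have "\<dots> = \<zero>\<^bsub>E\<^esub>" using fu by (simp add: E.r_neg)
        finally show "g u = \<zero>\<^bsub>E\<^esub>" .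
      qed
      have fgh: "f = g \<oplus>\<^bsub>D\<^esub> h"
      proof -
        have "g \<oplus>\<^bsub>D\<^esub> h = f \<oplus>\<^bsub>D\<^esub> ((\<ominus>\<^bsub>R\<^esub> \<one>\<^bsub>R\<^esub>) \<odot>\<^bsub>D\<^esub> h \<oplus>\<^bsub>D\<^esub> \<one>\<^bsub>R\<^esub> \<odot>\<^bsub>D\<^esub> h)"
          unfolding g_def using f(1) hD by (simp add: DM.a_assoc)
        also have "\<dots> = f \<oplus>\<^bsub>D\<^esub> ((\<ominus>\<^bsub>R\<^esub> \<one>\<^bsub>R\<^esub> \<oplus>\<^bsub>R\<^esub> \<one>\<^bsub>R\<^esub>) \<odot>\<^bsub>D\<^esub> h)"
          using hD by (simp add: DM.smult_l_distr)
        also have "\<dots> = f" using hD f(1) by (simp add: l_neg)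
        finally show ?thesis by simp
      qed
      have "h \<in> carrier D" "\<forall>y\<in>carrier M \<inter> \<Inter>(set Vs). h y = \<zero>\<^bsub>E\<^esub>" using hD h(3) unfolding B_def by auto
      hence hV: "a' \<odot>\<^bsub>D\<^esub> h \<in> V" using a'(3) by blast
      have gV: "a \<odot>\<^bsub>D\<^esub> g \<in> V" using a(3)[OF gD gU] .
      have "(a \<otimes>\<^bsub>R\<^esub> a') \<odot>\<^bsub>D\<^esub> f = (a \<otimes>\<^bsub>R\<^esub> a') \<odot>\<^bsub>D\<^esub> g \<oplus>\<^bsub>D\<^esub> (a \<otimes>\<^bsub>R\<^esub> a') \<odot>\<^bsub>D\<^esub> h"
        using fgh gD hD a a' by (simp add: DM.smult_r_distr)
      also have "\<dots> = a' \<odot>\<^bsub>D\<^esub> (a \<odot>\<^bsub>D\<^esub> g) \<oplus>\<^bsub>D\<^esub> a \<odot>\<^bsub>D\<^esub> (a' \<odot>\<^bsub>D\<^esub> h)"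
        using gD hD a(1) a'(1) by (simp add: DM.smult_assoc1[symmetric] m_comm)
      also have "\<dots> \<in> V" using Vd gV hV a(1) a'(1) by simp
      finally show ?thesis .
    qed
    moreover have "a \<otimes>\<^bsub>R\<^esub> a' \<in> carrier R" "a \<otimes>\<^bsub>R\<^esub> a' \<notin> p" using prime_mult[OF p] a a' by auto
    ultimately show ?case by blast
  }
qed

end


lemma uniform_k:
  "(\<forall>U\<in>set L. \<exists>k0::nat. \<forall>k\<ge>k0. P U k) \<Longrightarrow> \<exists>K. \<forall>k\<ge>K. \<forall>U\<in>set L. P U k"
proof (induction L)
  case Nil thus ?case by simp
next
  case (Cons U L)
  then obtain k0 where k0: "\<forall>k\<ge>k0. P U k" by auto
  from Cons obtain K where K: "\<forall>k\<ge>K. \<forall>U\<in>set L. P U k" by auto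
  have "\<forall>k\<ge>max k0 K. \<forall>U'\<in>set (U # L). P U' k" using k0 K by auto
  thus ?case by blast
qed

context fullctx begin

lemma pow_split:
  assumes "x \<in> carrier R" "n \<in> carrier M" "k0 \<le> (k::nat)"
  shows "(x [^]\<^bsub>R\<^esub> k) \<odot>\<^bsub>M\<^esub> n = (x [^]\<^bsub>R\<^esub> k0) \<odot>\<^bsub>M\<^esub> ((x [^]\<^bsub>R\<^esub> (k - k0)) \<odot>\<^bsub>M\<^esub> n)"
proof -
  have "x [^]\<^bsub>R\<^esub> k = x [^]\<^bsub>R\<^esub> k0 \<otimes>\<^bsub>R\<^esub> x [^]\<^bsub>R\<^esub> (k - k0)"
    using assms by (simp add: nat_pow_mult)
  thus ?thesis using assms by (simp add: M.smult_assoc1)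
qed

lemma AttD_sub_AssM:
  assumes dec: "has_primary_decomposition R M"
  shows "Att R D \<subseteq> Ass R M"
proof
  fix p assume "p \<in> Att R D"
  then obtain V where p: "primeideal p R" and V: "submodule V R D"
    and pV: "p = {r \<in> carrier R. \<forall>g\<in>carrier D. r \<odot>\<^bsub>D\<^esub> g \<in> V}"
    unfolding Att_def by blast
  interpret DM: module R D by (rule D_module)
  note Vd = DM.submoduleD[OF V]
  have pc: "p \<subseteq> carrier R" by (rule prime_carrier[OF p])
  obtain Us where prim: "\<forall>U\<in>set Us. primary_submodule R M U"
    and inter0: "carrier M \<inter> \<Inter>(set Us) = {\<zero>\<^bsub>M\<^esub>}"
    using dec unfolding has_primary_decomposition_def by blast
  have Usub: "\<And>U. U \<in> set Us \<Longrightarrow> submodule U R M" using prim unfolding primary_submodule_def by blast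
  have Uprim: "\<And>U x. U \<in> set Us \<Longrightarrow> x \<in> carrier R \<Longrightarrow>
        (\<forall>n\<in>carrier M. x \<odot>\<^bsub>M\<^esub> n \<in> U \<longrightarrow> n \<in> U) \<or> (\<exists>k::nat. \<forall>n\<in>carrier M. (x [^]\<^bsub>R\<^esub> k) \<odot>\<^bsub>M\<^esub> n \<in> U)"
    using prim unfolding primary_submodule_def by blast
  define pU where "pU U = {x \<in> carrier R. \<exists>k::nat. \<forall>n\<in>carrier M. (x [^]\<^bsub>R\<^esub> k) \<odot>\<^bsub>M\<^esub> n \<in> U}" for U
  define Us' where "Us' = filter (\<lambda>U. pU U \<noteq> p) Us"
  define Q where "Q = carrier M \<inter> \<Inter>(set Us')"
  have Us'sub: "\<forall>U\<in>set Us'. submodule U R M" unfolding Us'_def using Usub by auto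
  have claim1: "\<forall>U\<in>set Us'. submodule U R M \<and> (\<exists>a\<in>carrier R. a \<notin> p \<and>
            (\<forall>g\<in>carrier D. (\<forall>u\<in>U. g u = \<zero>\<^bsub>E\<^esub>) \<longrightarrow> a \<odot>\<^bsub>D\<^esub> g \<in> V))"
  proof
    fix U assume "U \<in> set Us'"
    hence U: "U \<in> set Us" "pU U \<noteq> p" unfolding Us'_def by auto
    note Ud = M.submoduleD[OF Usub[OF U(1)]]
    have "\<exists>a\<in>carrier R. a \<notin> p \<and> (\<forall>g\<in>carrier D. (\<forall>u\<in>U. g u = \<zero>\<^bsub>E\<^esub>) \<longrightarrow> a \<odot>\<^bsub>D\<^esub> g \<in> V)"
    proof (cases "\<exists>a\<in>pU U. a \<notin> p")
      case True
      then obtain a k where a: "a \<in> carrier R" "a \<notin> p" and ak: "\<forall>n\<in>carrier M. (a [^]\<^bsub>R\<^esub> (k::nat)) \<odot>\<^bsub>M\<^esub> n \<in> U"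
        unfolding pU_def by blast
      have "a [^]\<^bsub>R\<^esub> k \<odot>\<^bsub>D\<^esub> g \<in> V" if g: "g \<in> carrier D" "\<forall>u\<in>U. g u = \<zero>\<^bsub>E\<^esub>" for g
      proof -
        have "a [^]\<^bsub>R\<^esub> k \<odot>\<^bsub>D\<^esub> g = \<zero>\<^bsub>D\<^esub>"
          using smult_D_zero_iff[of "a [^]\<^bsub>R\<^esub> k" g] a g ak Dc by auto
        thus ?thesis using Vd by simp
      qed
      moreover have "a [^]\<^bsub>R\<^esub> k \<in> carrier R" "a [^]\<^bsub>R\<^esub> k \<notin> p" using a prime_pow[OF p] by auto
      ultimately show ?thesis by blast
    next
      case False
      hence "pU U \<subseteq> p" by blast
      then obtain x where x: "x \<in> p" "x \<notin> pU U" using U(2) by blast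
      have xc: "x \<in> carrier R" using x pc by blast
      have xinj: "\<forall>n\<in>carrier M. x \<odot>\<^bsub>M\<^esub> n \<in> U \<longrightarrow> n \<in> U"
        using Uprim[OF U(1) xc] x xc unfolding pU_def by blast
      have "\<one>\<^bsub>R\<^esub> \<odot>\<^bsub>D\<^esub> g \<in> V" if g: "g \<in> carrier D" "\<forall>u\<in>U. g u = \<zero>\<^bsub>E\<^esub>" for g
      proof -
        obtain h where h: "h \<in> lin_maps R M E" "x \<odot>\<^bsub>D\<^esub> h = g"
          using surj_lemma[OF Usub[OF U(1)] xc _ _] xinj g Dc by blast
        have "x \<odot>\<^bsub>D\<^esub> h \<in> V" using x pV h Dc by blast
        thus ?thesis using h g by simp
      qed
      thus ?thesis using prime_one[OF p] by blast
    qed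
    thus "submodule U R M \<and> (\<exists>a\<in>carrier R. a \<notin> p \<and>
            (\<forall>g\<in>carrier D. (\<forall>u\<in>U. g u = \<zero>\<^bsub>E\<^esub>) \<longrightarrow> a \<odot>\<^bsub>D\<^esub> g \<in> V))" using Usub[OF U(1)] by blast
  qed
  obtain a where a: "a \<in> carrier R" "a \<notin> p"
    "\<And>f. f \<in> carrier D \<Longrightarrow> (\<forall>y\<in>Q. f y = \<zero>\<^bsub>E\<^esub>) \<Longrightarrow> a \<odot>\<^bsub>D\<^esub> f \<in> V"
    using split_list[OF p V claim1] unfolding Q_def by blast
  have Qsub: "submodule Q R M" unfolding Q_def by (rule inter_submod[OF Us'sub])
  note Qd = M.submoduleD[OF Qsub]
  obtain n1 where n1: "n1 \<in> Q" "n1 \<noteq> \<zero>\<^bsub>M\<^esub>"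
  proof (rule ccontr)
    assume "\<not> thesis"
    hence Q0: "\<And>n. n \<in> Q \<Longrightarrow> n = \<zero>\<^bsub>M\<^esub>" using that by blast
    have "a \<odot>\<^bsub>D\<^esub> f \<in> V" if f: "f \<in> carrier D" for f
      using a(3)[OF f] Q0 lin_zero f Dc by auto
    hence "a \<in> p" using pV a(1) by blast
    thus False using a(2) by blast
  qed
  have "\<exists>z\<in>Q. {r \<in> carrier R. r \<odot>\<^bsub>M\<^esub> z = \<zero>\<^bsub>M\<^esub>} = p"
  proof (rule max_ann[OF M.module_axioms Qd(1) Qd(5) n1 _ _ pc])
    fix z assume z: "z \<in> Q" "z \<noteq> \<zero>\<^bsub>M\<^esub>"
    have zc: "z \<in> carrier M" using z Qd(1) by blast
    then obtain U where U: "U \<in> set Us" "z \<notin> U" using inter0 z(2) by blast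
    have "pU U = p"
    proof (rule ccontr)
      assume "pU U \<noteq> p"
      hence "U \<in> set Us'" unfolding Us'_def using U by simp
      thus False using z U unfolding Q_def by blast
    qed
    show "{r \<in> carrier R. r \<odot>\<^bsub>M\<^esub> z = \<zero>\<^bsub>M\<^esub>} \<subseteq> p"
    proof
      fix r assume "r \<in> {r \<in> carrier R. r \<odot>\<^bsub>M\<^esub> z = \<zero>\<^bsub>M\<^esub>}"
      hence r: "r \<in> carrier R" "r \<odot>\<^bsub>M\<^esub> z = \<zero>\<^bsub>M\<^esub>" by auto
      have "r \<odot>\<^bsub>M\<^esub> z \<in> U" using r M.submoduleD(2)[OF Usub[OF U(1)]] by simp
      hence "\<not> (\<forall>n\<in>carrier M. r \<odot>\<^bsub>M\<^esub> n \<in> U \<longrightarrow> n \<in> U)" using U(2) zc by blast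
      hence "r \<in> pU U" using Uprim[OF U(1) r(1)] r(1) unfolding pU_def by blast
      thus "r \<in> p" using \<open>pU U = p\<close> by simp
    qed
  next
    fix x z assume x: "x \<in> p" and z: "z \<in> Q"
    have xc: "x \<in> carrier R" using x pc by blast
    have zc: "z \<in> carrier M" using z Qd(1) by blast
    have "\<forall>U\<in>set Us. \<exists>k0::nat. \<forall>k\<ge>k0. (x [^]\<^bsub>R\<^esub> k) \<odot>\<^bsub>M\<^esub> z \<in> U"
    proof
      fix U assume U: "U \<in> set Us"
      note Ud = M.submoduleD[OF Usub[OF U]]
      show "\<exists>k0::nat. \<forall>k\<ge>k0. (x [^]\<^bsub>R\<^esub> k) \<odot>\<^bsub>M\<^esub> z \<in> U"
      proof (cases "pU U = p")
        case True
        then obtain k0 :: nat where k0: "\<forall>n\<in>carrier M. (x [^]\<^bsub>R\<^esub> k0) \<odot>\<^bsub>M\<^esub> n \<in> U"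
          using x unfolding pU_def by blast
        have "\<forall>k\<ge>k0. (x [^]\<^bsub>R\<^esub> k) \<odot>\<^bsub>M\<^esub> z \<in> U"
        proof (intro allI impI)
          fix k assume "k0 \<le> k"
          thus "(x [^]\<^bsub>R\<^esub> k) \<odot>\<^bsub>M\<^esub> z \<in> U" using pow_split[OF xc zc] k0 xc zc by simp
        qed
        thus ?thesis by blast
      next
        case False
        hence "z \<in> U" using z U unfolding Q_def Us'_def by auto
        hence "\<forall>k::nat. (x [^]\<^bsub>R\<^esub> k) \<odot>\<^bsub>M\<^esub> z \<in> U" using Ud xc by simp
        thus ?thesis by blast
      qed
    qed
    from uniform_k[OF this] obtain K :: nat where "\<forall>k\<ge>K. \<forall>U\<in>set Us. (x [^]\<^bsub>R\<^esub> k) \<odot>\<^bsub>M\<^esub> z \<in> U" by (elim exE)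
    hence K: "\<forall>U\<in>set Us. (x [^]\<^bsub>R\<^esub> K) \<odot>\<^bsub>M\<^esub> z \<in> U" by simp
    moreover have "(x [^]\<^bsub>R\<^esub> K) \<odot>\<^bsub>M\<^esub> z \<in> carrier M" using xc zc by simp
    ultimately have "(x [^]\<^bsub>R\<^esub> K) \<odot>\<^bsub>M\<^esub> z \<in> carrier M \<inter> \<Inter>(set Us)" by blast
    thus "\<exists>k::nat. (x [^]\<^bsub>R\<^esub> k) \<odot>\<^bsub>M\<^esub> z = \<zero>\<^bsub>M\<^esub>" using inter0 by blast
  qed
  then obtain z where "z \<in> Q" "{r \<in> carrier R. r \<odot>\<^bsub>M\<^esub> z = \<zero>\<^bsub>M\<^esub>} = p" by blast
  moreover have "z \<in> carrier M" using \<open>z \<in> Q\<close> Qd(1) by blast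
  ultimately show "p \<in> Ass R M" unfolding Ass_def using p by blast
qed

end


context fullctx begin

lemma sum_submod:
  "\<forall>T\<in>set Ts. submodule T R M \<Longrightarrow> submodule (submodule_sum M Ts) R M"
proof (induction Ts)
  case Nil show ?case using zero_submod by simp
next
  case (Cons T Ts)
  hence T: "submodule T R M" and S: "submodule (submodule_sum M Ts) R M" by auto
  note Td = M.submoduleD[OF T] and Sd = M.submoduleD[OF S]
  show ?case unfolding submodule_sum.simps
  proof (rule M.submoduleI2)
    show "{a \<oplus>\<^bsub>M\<^esub> b |a b. a \<in> T \<and> b \<in> submodule_sum M Ts} \<subseteq> carrier M" using Td(1) Sd(1) by auto
    have "\<zero>\<^bsub>M\<^esub> \<oplus>\<^bsub>M\<^esub> \<zero>\<^bsub>M\<^esub> \<in> {a \<oplus>\<^bsub>M\<^esub> b |a b. a \<in> T \<and> b \<in> submodule_sum M Ts}" using Td Sd by blast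
    thus "\<zero>\<^bsub>M\<^esub> \<in> {a \<oplus>\<^bsub>M\<^esub> b |a b. a \<in> T \<and> b \<in> submodule_sum M Ts}" by simp
  next
    fix x y assume "x \<in> {a \<oplus>\<^bsub>M\<^esub> b |a b. a \<in> T \<and> b \<in> submodule_sum M Ts}"
      "y \<in> {a \<oplus>\<^bsub>M\<^esub> b |a b. a \<in> T \<and> b \<in> submodule_sum M Ts}"
    then obtain a b a' b' where X: "x = a \<oplus>\<^bsub>M\<^esub> b" "a \<in> T" "b \<in> submodule_sum M Ts"
      "y = a' \<oplus>\<^bsub>M\<^esub> b'" "a' \<in> T" "b' \<in> submodule_sum M Ts" by blast
    have c: "a \<in> carrier M" "b \<in> carrier M" "a' \<in> carrier M" "b' \<in> carrier M" using X Td(1) Sd(1) by auto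
    have "x \<oplus>\<^bsub>M\<^esub> y = (a \<oplus>\<^bsub>M\<^esub> a') \<oplus>\<^bsub>M\<^esub> (b \<oplus>\<^bsub>M\<^esub> b')" using X c by (simp add: M.a_ac)
    moreover have "a \<oplus>\<^bsub>M\<^esub> a' \<in> T" "b \<oplus>\<^bsub>M\<^esub> b' \<in> submodule_sum M Ts" using X Td Sd by auto
    ultimately show "x \<oplus>\<^bsub>M\<^esub> y \<in> {a \<oplus>\<^bsub>M\<^esub> b |a b. a \<in> T \<and> b \<in> submodule_sum M Ts}" by blast
  next
    fix r x assume r: "r \<in> carrier R" and "x \<in> {a \<oplus>\<^bsub>M\<^esub> b |a b. a \<in> T \<and> b \<in> submodule_sum M Ts}"
    then obtain a b where X: "x = a \<oplus>\<^bsub>M\<^esub> b" "a \<in> T" "b \<in> submodule_sum M Ts" by blast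
    have c: "a \<in> carrier M" "b \<in> carrier M" using X Td(1) Sd(1) by auto
    have "r \<odot>\<^bsub>M\<^esub> x = r \<odot>\<^bsub>M\<^esub> a \<oplus>\<^bsub>M\<^esub> r \<odot>\<^bsub>M\<^esub> b" using X c r by (simp add: M.smult_r_distr)
    moreover have "r \<odot>\<^bsub>M\<^esub> a \<in> T" "r \<odot>\<^bsub>M\<^esub> b \<in> submodule_sum M Ts" using X Td Sd r by auto
    ultimately show "r \<odot>\<^bsub>M\<^esub> x \<in> {a \<oplus>\<^bsub>M\<^esub> b |a b. a \<in> T \<and> b \<in> submodule_sum M Ts}" by blast
  qed
qed

lemma sum_member:
  "\<forall>T\<in>set Ts. submodule T R M \<Longrightarrow> T \<in> set Ts \<Longrightarrow> T \<subseteq> submodule_sum M Ts"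
proof (induction Ts)
  case Nil thus ?case by simp
next
  case (Cons T' Ts)
  have T': "submodule T' R M" and S: "submodule (submodule_sum M Ts) R M"
    using Cons.prems sum_submod[of Ts] by auto
  note Td = M.submoduleD[OF T'] and Sd = M.submoduleD[OF S]
  show ?case
  proof
    fix t assume t: "t \<in> T"
    show "t \<in> submodule_sum M (T' # Ts)"
    proof (cases "T = T'")
      case True
      hence "t \<in> carrier M" using t Td by blast
      hence "t = t \<oplus>\<^bsub>M\<^esub> \<zero>\<^bsub>M\<^esub>" by simp
      thus ?thesis using True t Sd(2) by auto
    next
      case False
      hence "T \<in> set Ts" using Cons.prems by simp
      hence "t \<in> submodule_sum M Ts" using Cons t by auto
      moreover hence "t \<in> carrier M" using Sd by blast
      ultimately have "t = \<zero>\<^bsub>M\<^esub> \<oplus>\<^bsub>M\<^esub> t" "t \<in> submodule_sum M Ts" by simp_all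
      thus ?thesis using Td(2) unfolding submodule_sum.simps by blast
    qed
  qed
qed

lemma split2:
  assumes p: "primeideal p R" and U: "submodule U R M"
  shows "\<forall>T\<in>set Ts. submodule T R M \<and> (\<exists>a\<in>carrier R. a \<notin> p \<and> (\<forall>s\<in>T. a \<odot>\<^bsub>M\<^esub> s \<in> U)) \<Longrightarrow>
    \<exists>a\<in>carrier R. a \<notin> p \<and> (\<forall>m\<in>submodule_sum M Ts. a \<odot>\<^bsub>M\<^esub> m \<in> U)"
proof (induction Ts)
  note Ud = M.submoduleD[OF U]
  {
    case Nil show ?case using prime_one[OF p] Ud(2) by (intro bexI[of _ "\<one>\<^bsub>R\<^esub>"]) auto
  next
    case (Cons T Ts)
    from Cons.prems have T: "submodule T R M" by simp
    from Cons.prems obtain a where a: "a \<in> carrier R" "a \<notin> p" "\<And>s. s \<in> T \<Longrightarrow> a \<odot>\<^bsub>M\<^esub> s \<in> U" by auto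
    from Cons obtain a' where a': "a' \<in> carrier R" "a' \<notin> p" "\<And>m. m \<in> submodule_sum M Ts \<Longrightarrow> a' \<odot>\<^bsub>M\<^esub> m \<in> U" by auto
    have S: "submodule (submodule_sum M Ts) R M" using Cons.prems sum_submod[of Ts] by auto
    note Td = M.submoduleD[OF T] and Sd = M.submoduleD[OF S]
    have "(a \<otimes>\<^bsub>R\<^esub> a') \<odot>\<^bsub>M\<^esub> m \<in> U" if m: "m \<in> submodule_sum M (T # Ts)" for m
    proof -
      obtain s t where X: "m = s \<oplus>\<^bsub>M\<^esub> t" "s \<in> T" "t \<in> submodule_sum M Ts" using m by auto
      have c: "s \<in> carrier M" "t \<in> carrier M" using X Td(1) Sd(1) by auto
      have "(a \<otimes>\<^bsub>R\<^esub> a') \<odot>\<^bsub>M\<^esub> m = a' \<odot>\<^bsub>M\<^esub> (a \<odot>\<^bsub>M\<^esub> s) \<oplus>\<^bsub>M\<^esub> a \<odot>\<^bsub>M\<^esub> (a' \<odot>\<^bsub>M\<^esub> t)"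
        using X c a(1) a'(1) by (simp add: M.smult_r_distr M.smult_assoc1[symmetric] m_comm)
      also have "\<dots> \<in> U" using Ud a a' X by simp
      finally show ?thesis .
    qed
    moreover have "a \<otimes>\<^bsub>R\<^esub> a' \<in> carrier R" "a \<otimes>\<^bsub>R\<^esub> a' \<notin> p" using prime_mult[OF p] a a' by auto
    ultimately show ?case by blast
  }
qed

lemma sum_vanish:
  assumes f: "f \<in> lin_maps R M E"
  shows "\<forall>T\<in>set Ts. submodule T R M \<and> (\<forall>s\<in>T. f s = \<zero>\<^bsub>E\<^esub>) \<Longrightarrow> \<forall>m\<in>submodule_sum M Ts. f m = \<zero>\<^bsub>E\<^esub>"
proof (induction Ts)
  case Nil thus ?case using lin_zero[OF f] by simp
next
  case (Cons T Ts)
  have T: "submodule T R M" and S: "submodule (submodule_sum M Ts) R M" using Cons.prems sum_submod[of Ts] by auto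
  note Td = M.submoduleD[OF T] and Sd = M.submoduleD[OF S]
  show ?case
  proof
    fix m assume "m \<in> submodule_sum M (T # Ts)"
    then obtain s t where X: "m = s \<oplus>\<^bsub>M\<^esub> t" "s \<in> T" "t \<in> submodule_sum M Ts" by auto
    have c: "s \<in> carrier M" "t \<in> carrier M" using X Td(1) Sd(1) by auto
    show "f m = \<zero>\<^bsub>E\<^esub>" using X c Cons linD(3)[OF f] by simp
  qed
qed

lemma sum_pow:
  assumes P: "submodule P R M" and x: "x \<in> carrier R"
  shows "\<forall>T\<in>set Ts. submodule T R M \<and> (\<exists>k0::nat. \<forall>k\<ge>k0. \<forall>s\<in>T. (x [^]\<^bsub>R\<^esub> k) \<odot>\<^bsub>M\<^esub> s \<in> P) \<Longrightarrow>
     \<exists>K::nat. \<forall>k\<ge>K. \<forall>m\<in>submodule_sum M Ts. (x [^]\<^bsub>R\<^esub> k) \<odot>\<^bsub>M\<^esub> m \<in> P"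
proof (induction Ts)
  note Pd = M.submoduleD[OF P]
  {
    case Nil show ?case using Pd x by simp
  next
    case (Cons T Ts)
    have T: "submodule T R M" and S: "submodule (submodule_sum M Ts) R M" using Cons.prems sum_submod[of Ts] by auto
    note Td = M.submoduleD[OF T] and Sd = M.submoduleD[OF S]
    from Cons.prems obtain k0 :: nat where k0: "\<forall>k\<ge>k0. \<forall>s\<in>T. (x [^]\<^bsub>R\<^esub> k) \<odot>\<^bsub>M\<^esub> s \<in> P" by auto
    from Cons obtain K :: nat where K: "\<forall>k\<ge>K. \<forall>m\<in>submodule_sum M Ts. (x [^]\<^bsub>R\<^esub> k) \<odot>\<^bsub>M\<^esub> m \<in> P" by auto
    have "\<forall>k\<ge>max k0 K. \<forall>m\<in>submodule_sum M (T # Ts). (x [^]\<^bsub>R\<^esub> k) \<odot>\<^bsub>M\<^esub> m \<in> P"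
    proof (intro allI impI ballI)
      fix k m assume k: "max k0 K \<le> k" and "m \<in> submodule_sum M (T # Ts)"
      then obtain s t where X: "m = s \<oplus>\<^bsub>M\<^esub> t" "s \<in> T" "t \<in> submodule_sum M Ts" by auto
      have c: "s \<in> carrier M" "t \<in> carrier M" using X Td(1) Sd(1) by auto
      have "(x [^]\<^bsub>R\<^esub> k) \<odot>\<^bsub>M\<^esub> m = (x [^]\<^bsub>R\<^esub> k) \<odot>\<^bsub>M\<^esub> s \<oplus>\<^bsub>M\<^esub> (x [^]\<^bsub>R\<^esub> k) \<odot>\<^bsub>M\<^esub> t"
        using X c x by (simp add: M.smult_r_distr)
      also have "\<dots> \<in> P" using k0 K k X Pd by simp
      finally show "(x [^]\<^bsub>R\<^esub> k) \<odot>\<^bsub>M\<^esub> m \<in> P" .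
    qed
    thus ?case by blast
  }
qed

end


context fullctx begin

lemma AttM_sub_AssD:
  assumes dec: "has_secondary_decomposition R M"
  shows "Att R M \<subseteq> Ass R D"
proof
  fix p assume "p \<in> Att R M"
  then obtain U where p: "primeideal p R" and U: "submodule U R M"
    and pU: "p = {r \<in> carrier R. \<forall>n\<in>carrier M. r \<odot>\<^bsub>M\<^esub> n \<in> U}"
    unfolding Att_def by blast
  interpret DM: module R D by (rule D_module)
  note Ud = M.submoduleD[OF U]
  have pc: "p \<subseteq> carrier R" by (rule prime_carrier[OF p])
  obtain Ss where sec: "\<forall>S\<in>set Ss. secondary_submodule R M S"
    and sumM: "submodule_sum M Ss = carrier M"
    using dec unfolding has_secondary_decomposition_def by blast
  have Ssub: "\<And>S. S \<in> set Ss \<Longrightarrow> submodule S R M" using sec unfolding secondary_submodule_def by blast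
  have Ssec: "\<And>S x. S \<in> set Ss \<Longrightarrow> x \<in> carrier R \<Longrightarrow>
        (\<forall>u\<in>S. \<exists>v\<in>S. x \<odot>\<^bsub>M\<^esub> v = u) \<or> (\<exists>k::nat. \<forall>u\<in>S. (x [^]\<^bsub>R\<^esub> k) \<odot>\<^bsub>M\<^esub> u = \<zero>\<^bsub>M\<^esub>)"
    using sec unfolding secondary_submodule_def by blast
  define qS where "qS S = {x \<in> carrier R. \<exists>k::nat. \<forall>u\<in>S. (x [^]\<^bsub>R\<^esub> k) \<odot>\<^bsub>M\<^esub> u = \<zero>\<^bsub>M\<^esub>}" for S
  define Ts where "Ts = U # filter (\<lambda>S. qS S \<noteq> p) Ss"
  define P where "P = submodule_sum M Ts"
  have Tsub: "\<forall>T\<in>set Ts. submodule T R M" unfolding Ts_def using U Ssub by auto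
  have Psub: "submodule P R M" unfolding P_def by (rule sum_submod[OF Tsub])
  note Pd = M.submoduleD[OF Psub]
  have SP: "S \<subseteq> P" if "S \<in> set Ss" "qS S \<noteq> p" for S
    unfolding P_def using sum_member[OF Tsub] that unfolding Ts_def by simp
  have "\<forall>T\<in>set Ts. submodule T R M \<and> (\<exists>a\<in>carrier R. a \<notin> p \<and> (\<forall>s\<in>T. a \<odot>\<^bsub>M\<^esub> s \<in> U))"
  proof
    fix T assume T: "T \<in> set Ts"
    have "\<exists>a\<in>carrier R. a \<notin> p \<and> (\<forall>s\<in>T. a \<odot>\<^bsub>M\<^esub> s \<in> U)"
    proof (cases "T = U")
      case True
      thus ?thesis using prime_one[OF p] Ud(1) by (intro bexI[of _ "\<one>\<^bsub>R\<^esub>"]) auto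
    next
      case False
      hence S: "T \<in> set Ss" "qS T \<noteq> p" using T unfolding Ts_def by auto
      note Sd = M.submoduleD[OF Ssub[OF S(1)]]
      show ?thesis
      proof (cases "\<exists>a\<in>qS T. a \<notin> p")
        case True
        then obtain a k where a: "a \<in> carrier R" "a \<notin> p" and ak: "\<forall>u\<in>T. (a [^]\<^bsub>R\<^esub> (k::nat)) \<odot>\<^bsub>M\<^esub> u = \<zero>\<^bsub>M\<^esub>"
          unfolding qS_def by blast
        have "\<forall>s\<in>T. (a [^]\<^bsub>R\<^esub> k) \<odot>\<^bsub>M\<^esub> s \<in> U" using ak Ud(2) by simp
        moreover have "a [^]\<^bsub>R\<^esub> k \<in> carrier R" "a [^]\<^bsub>R\<^esub> k \<notin> p" using a prime_pow[OF p] by auto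
        ultimately show ?thesis by blast
      next
        case False
        hence "qS T \<subseteq> p" by blast
        then obtain x where x: "x \<in> p" "x \<notin> qS T" using S(2) by blast
        have xc: "x \<in> carrier R" using x pc by blast
        have xs: "\<forall>u\<in>T. \<exists>v\<in>T. x \<odot>\<^bsub>M\<^esub> v = u" using Ssec[OF S(1) xc] x xc unfolding qS_def by blast
        have "\<forall>s\<in>T. \<one>\<^bsub>R\<^esub> \<odot>\<^bsub>M\<^esub> s \<in> U"
        proof
          fix s assume s: "s \<in> T"
          then obtain v where v: "v \<in> T" "x \<odot>\<^bsub>M\<^esub> v = s" using xs by blast
          have "x \<odot>\<^bsub>M\<^esub> v \<in> U" using x pU v Sd(1) by blast
          thus "\<one>\<^bsub>R\<^esub> \<odot>\<^bsub>M\<^esub> s \<in> U" using v s Sd(1) by auto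
        qed
        thus ?thesis using prime_one[OF p] by blast
      qed
    qed
    thus "submodule T R M \<and> (\<exists>a\<in>carrier R. a \<notin> p \<and> (\<forall>s\<in>T. a \<odot>\<^bsub>M\<^esub> s \<in> U))" using Tsub T by blast
  qed
  from split2[OF p U this] obtain a where a: "a \<in> carrier R" "a \<notin> p" "\<And>m. m \<in> P \<Longrightarrow> a \<odot>\<^bsub>M\<^esub> m \<in> U"
    unfolding P_def by blast
  have "P \<noteq> carrier M"
  proof
    assume "P = carrier M"
    hence "a \<in> p" using pU a by blast
    thus False using a by blast
  qed
  then obtain m where m: "m \<in> carrier M" "m \<notin> P" using Pd(1) by blast
  obtain f0 where f0: "f0 \<in> lin_maps R M E" "\<forall>u\<in>P. f0 u = \<zero>\<^bsub>E\<^esub>" "f0 m \<noteq> \<zero>\<^bsub>E\<^esub>"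
    using cogen[OF Psub m] by blast
  define Z where "Z = {f \<in> carrier D. \<forall>y\<in>P. f y = \<zero>\<^bsub>E\<^esub>}"
  have "\<exists>z\<in>Z. {r \<in> carrier R. r \<odot>\<^bsub>D\<^esub> z = \<zero>\<^bsub>D\<^esub>} = p"
  proof (rule max_ann[OF D_module _ _ _ _ _ _ pc])
    show "Z \<subseteq> carrier D" unfolding Z_def by blast
  next
    fix r f assume r: "r \<in> carrier R" and f: "f \<in> Z"
    thus "r \<odot>\<^bsub>D\<^esub> f \<in> Z" unfolding Z_def using Pd(1) by (auto simp: D_app)
  next
    show "f0 \<in> Z" unfolding Z_def using f0 Dc by blast
    show "f0 \<noteq> \<zero>\<^bsub>D\<^esub>" using f0 m D_eq_zero_iff by blast
  next
    fix f assume f: "f \<in> Z" "f \<noteq> \<zero>\<^bsub>D\<^esub>"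
    have fl: "f \<in> lin_maps R M E" and fP: "\<forall>y\<in>P. f y = \<zero>\<^bsub>E\<^esub>" using f Dc unfolding Z_def by auto
    show "{r \<in> carrier R. r \<odot>\<^bsub>D\<^esub> f = \<zero>\<^bsub>D\<^esub>} \<subseteq> p"
    proof
      fix r assume "r \<in> {r \<in> carrier R. r \<odot>\<^bsub>D\<^esub> f = \<zero>\<^bsub>D\<^esub>}"
      hence r: "r \<in> carrier R" "r \<odot>\<^bsub>D\<^esub> f = \<zero>\<^bsub>D\<^esub>" by auto
      have rf: "\<And>x. x \<in> carrier M \<Longrightarrow> f (r \<odot>\<^bsub>M\<^esub> x) = \<zero>\<^bsub>E\<^esub>" using smult_D_zero_iff[OF r(1) fl] r by blast
      show "r \<in> p"
      proof (rule ccontr)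
        assume rp: "r \<notin> p"
        obtain m' where m': "m' \<in> carrier M" "f m' \<noteq> \<zero>\<^bsub>E\<^esub>" using f(2) D_eq_zero_iff[OF fl] by blast
        have "\<not> (\<forall>S\<in>set Ss. submodule S R M \<and> (\<forall>s\<in>S. f s = \<zero>\<^bsub>E\<^esub>))"
          using sum_vanish[OF fl, of Ss] m' sumM by blast
        then obtain S s where S: "S \<in> set Ss" "s \<in> S" "f s \<noteq> \<zero>\<^bsub>E\<^esub>" using Ssub by blast
        have "qS S = p"
        proof (rule ccontr)
          assume "qS S \<noteq> p"
          hence "s \<in> P" using SP S by blast
          thus False using fP S by blast
        qed
        hence "r \<notin> qS S" using rp by simp
        hence "\<forall>u\<in>S. \<exists>v\<in>S. r \<odot>\<^bsub>M\<^esub> v = u" using Ssec[OF S(1) r(1)] r(1) unfolding qS_def by blast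
        then obtain v where v: "v \<in> S" "r \<odot>\<^bsub>M\<^esub> v = s" using S by blast
        have "v \<in> carrier M" using v M.submoduleD(1)[OF Ssub[OF S(1)]] by blast
        thus False using rf v S by blast
      qed
    qed
  next
    fix x f assume x: "x \<in> p" and f: "f \<in> Z"
    have fl: "f \<in> lin_maps R M E" and fP: "\<forall>y\<in>P. f y = \<zero>\<^bsub>E\<^esub>" using f Dc unfolding Z_def by auto
    have xc: "x \<in> carrier R" using x pc by blast
    have "\<forall>S\<in>set Ss. submodule S R M \<and> (\<exists>k0::nat. \<forall>k\<ge>k0. \<forall>s\<in>S. (x [^]\<^bsub>R\<^esub> k) \<odot>\<^bsub>M\<^esub> s \<in> P)"
    proof
      fix S assume S: "S \<in> set Ss"
      note Sd = M.submoduleD[OF Ssub[OF S]]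
      have "\<exists>k0::nat. \<forall>k\<ge>k0. \<forall>s\<in>S. (x [^]\<^bsub>R\<^esub> k) \<odot>\<^bsub>M\<^esub> s \<in> P"
      proof (cases "qS S = p")
        case True
        then obtain k0 :: nat where k0: "\<forall>u\<in>S. (x [^]\<^bsub>R\<^esub> k0) \<odot>\<^bsub>M\<^esub> u = \<zero>\<^bsub>M\<^esub>"
          using x unfolding qS_def by blast
        have "\<forall>k\<ge>k0. \<forall>s\<in>S. (x [^]\<^bsub>R\<^esub> k) \<odot>\<^bsub>M\<^esub> s \<in> P"
        proof (intro allI impI ballI)
          fix k s assume k: "k0 \<le> k" and s: "s \<in> S"
          have sc: "s \<in> carrier M" using s Sd by blast
          have "(x [^]\<^bsub>R\<^esub> k) \<odot>\<^bsub>M\<^esub> s = (x [^]\<^bsub>R\<^esub> k0) \<odot>\<^bsub>M\<^esub> ((x [^]\<^bsub>R\<^esub> (k - k0)) \<odot>\<^bsub>M\<^esub> s)"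
            by (rule pow_split[OF xc sc k])
          also have "\<dots> = \<zero>\<^bsub>M\<^esub>" using k0 Sd(5) s xc by simp
          finally show "(x [^]\<^bsub>R\<^esub> k) \<odot>\<^bsub>M\<^esub> s \<in> P" using Pd(2) by simp
        qed
        thus ?thesis by blast
      next
        case False
        hence "S \<subseteq> P" using SP S by blast
        hence "\<forall>k::nat. \<forall>s\<in>S. (x [^]\<^bsub>R\<^esub> k) \<odot>\<^bsub>M\<^esub> s \<in> P" using Pd xc by auto
        thus ?thesis by blast
      qed
      thus "submodule S R M \<and> (\<exists>k0::nat. \<forall>k\<ge>k0. \<forall>s\<in>S. (x [^]\<^bsub>R\<^esub> k) \<odot>\<^bsub>M\<^esub> s \<in> P)"
        using Ssub[OF S] by blast
    qed
    from sum_pow[OF Psub xc this] obtain K :: nat where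
      "\<forall>k\<ge>K. \<forall>m\<in>submodule_sum M Ss. (x [^]\<^bsub>R\<^esub> k) \<odot>\<^bsub>M\<^esub> m \<in> P" by (elim exE)
    hence K: "\<forall>m\<in>carrier M. (x [^]\<^bsub>R\<^esub> K) \<odot>\<^bsub>M\<^esub> m \<in> P" using sumM by simp
    have "(x [^]\<^bsub>R\<^esub> K) \<odot>\<^bsub>D\<^esub> f = \<zero>\<^bsub>D\<^esub>"
      using smult_D_zero_iff[of "x [^]\<^bsub>R\<^esub> K" f] xc fl K fP by simp
    thus "\<exists>k::nat. (x [^]\<^bsub>R\<^esub> k) \<odot>\<^bsub>D\<^esub> f = \<zero>\<^bsub>D\<^esub>" by blast
  qed
  then obtain f where "f \<in> Z" "{r \<in> carrier R. r \<odot>\<^bsub>D\<^esub> f = \<zero>\<^bsub>D\<^esub>} = p" by blast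
  moreover have "f \<in> carrier D" using \<open>f \<in> Z\<close> unfolding Z_def by blast
  ultimately show "p \<in> Ass R D" unfolding Ass_def using p by blast
qed

end


theorem mainTheorem3:
  fixes R :: "('a, 'c) ring_scheme" and m :: "'a set"
    and M :: "('a, 'b) module" and E :: "('a, 'e) module"
  assumes "noetherian_ring R" and "cring R"
    and "local_ring_with R m"
    and "injective_hull_residue R m E"
    and "module R M"
  shows "(has_primary_decomposition R M \<longrightarrow> Ass R M = Att R (Hom_mod R M E)) \<and>
         (has_secondary_decomposition R M \<longrightarrow> Att R M = Ass R (Hom_mod R M E))"
proof -
  have inj: "injective_module R E" using assms(4) unfolding injective_hull_residue_def by blast
  have Emod: "module R E" using inj unfolding injective_module_def by blast
  have T: "twomod R M E" unfolding twomod_def using assms(2,5) Emod by blast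
  have I: "injctx R M E" using T inj by (intro injctx.intro injctx_axioms.intro)
  have F: "fullctx R M E m"
    using I assms(1,3,4) by (intro fullctx.intro fullctx_axioms.intro) (auto simp: noetherian_ring_def)
  interpret F: fullctx R M E m by (rule F)
  show ?thesis
    using F.AssM_sub_AttD F.AttD_sub_AssM F.AssD_sub_AttM F.AttM_sub_AssD by blast
qed


end
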